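(* Assume the standing hypotheses described in the context. Take $0\le\theta\le\Theta$ and $N_\theta\in\mathcal N_\theta$. For any $(t_0,\varepsilon_0)\in\Omega$ and $y_0\in K(t_0,\varepsilon_0)$, the sequences \[y_{k+1}=N_\theta(y_k),\qquad (t_{k+1},\varepsilon_{k+1})=n_\theta(t_k,\varepsilon_k),\qquad k=0,1,\dots,\] are well defined, $y_k\in K(t_k,\varepsilon_k)$ and $(t_k,\varepsilon_k)\in\Omega$ for all $k$, the sequence $\{t_k\}$ is strictly increasing and converges to some $\tilde t\in(0,\lambda]$, the sequence $\{\varepsilon_k\}$ is non-decreasing and converges to some $\tilde\varepsilon\in[0,\kappa\lambda]$, \[\|F'(x_0)^{-1}F(y_k)\|\le f(t_k)+\varepsilon_k\le\Big(\frac{1+\theta^2}{2}\Big)^k(f(t_0)+\varepsilon_0),\qquad k=0,1,\dots,\] the sequence $\{y_k\}$ is contained in $B(x_0,\lambda)$ and converges to a point $x_*\in B[x_0,t_*]$ which is the unique zero of $F$ in $B(x_0,\bar\tau)$, and \[\|y_{k+1}-y_k\|\le t_{k+1}-t_k,\qquad \|x_*-y_k\|\le\tilde t-t_k,\qquad k=0,1,\dots.\] Moreover, if $\lambda<R$, then for $k=0,1,\dots$, \[\|x_*-y_{k+1}\|\le\Big[\frac{1+\theta}{2}\frac{D^-f'(\lambda)}{|f'(\lambda)|}\|x_*-y_k\|+\theta\,\frac{2+f'(\lambda)}{|f'(\lambda)|}\Big]\|x_*-y_k\|,\] and if additionally $0\le\theta<\kappa/(4+\kappa)$, then $\|x_*-y_{k+1}\|\le\big[\frac{1+\theta}{2}+\frac{2\theta}{\kappa}\big]\|x_*-y_k\|$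 for $k=0,1,\dots$.
   Context: Standing hypotheses: $\mathbb X,\mathbb Y$ are Banach spaces; $B(x,r)$, $B[x,r]$ are open/closed balls. $R\in\mathbb R$, $C\subseteq\mathbb X$, $F:C\to\mathbb Y$ is continuous and continuously differentiable on $\mathrm{int}(C)$, $x_0\in\mathrm{int}(C)$ with $F'(x_0)$ non-singular, $f:[0,R)\to\mathbb R$ is continuously differentiable, $B(x_0,R)\subseteq C$, $\|F'(x_0)^{-1}[F'(y)-F'(x)]\|\le f'(\|y-x\|+\|x-x_0\|)-f'(\|x-x_0\|)$ for all $x,y\in B(x_0,R)$ with $\|x-x_0\|+\|y-x\|<R$, $\|F'(x_0)^{-1}F(x_0)\|\le f(0)$, and (h1) $f(0)>0$, $f'(0)=-1$; (h2) $f'$ is strictly increasing and convex; (h3) $f(t)<0$ for some $t\in(0,R)$. Notation: $t_*:=\min f^{-1}(\{0\})$, $\bar\tau:=\sup\{t\in[0,R):f(t)<0\}$, $\bar t:=\sup\{t\in[0,R):f'(t)<0\}$, $\kappa:=\sup_{0<t<R}\frac{-f(t)}{t}$, $\lambda:=\sup\{t\in[0,R):\kappa+f'(t)<0\}$, $\Theta:=\kappa/(2-\kappa)$. $D^-f'(\lambda)$ is the left derivative of $f'$ at $\lambda$. For $\theta\ge0$, $n_\theta:[0,\bar t)\times[0,\infty)\to\mathbb R^2$, $n_\theta(t,\varepsilon):=\big(t-(1+\theta)\frac{f(t)+\varepsilon}{f'(t)},\ \varepsilon+2\theta(f(t)+\varepsilon)\big)$. $\Omega:=\{(t,\varepsilon)\in\mathbb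 R^2: 0\le t<\lambda,\ 0\le\varepsilon\le\kappa t,\ 0<f(t)+\varepsilon\}$. $K(t,\varepsilon):=\{x: \|x-x_0\|\le t,\ \|F'(x_0)^{-1}F(x)\|\le f(t)+\varepsilon\}$. $\mathcal N_\theta$ is the family of maps $N:B(x_0,\bar t)\to\mathbb X$ such that $\|F'(x_0)^{-1}[F(x)+F'(x)(N(x)-x)]\|\le\theta\|F'(x_0)^{-1}F(x)\|$ for each $x\in B(x_0,\bar t)$. *)

theory Defs
  imports "HOL-Analysis.Analysis"
begin

definition tstar :: "(real \<Rightarrow> real) \<Rightarrow> real \<Rightarrow> real" where
  "tstar f R = Inf {t \<in> {0..<R}. f t = 0}"

definition taubar :: "(real \<Rightarrow> real) \<Rightarrow> real \<Rightarrow> real" where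
  "taubar f R = Sup {t \<in> {0..<R}. f t < 0}"

definition tbar :: "(real \<Rightarrow> real) \<Rightarrow> real \<Rightarrow> real" where
  "tbar f' R = Sup {t \<in> {0..<R}. f' t < 0}"

definition kappa :: "(real \<Rightarrow> real) \<Rightarrow> real \<Rightarrow> real" where
  "kappa f R = Sup ((\<lambda>t. - f t / t) ` {0<..<R})"

definition lambda :: "(real \<Rightarrow> real) \<Rightarrow> (real \<Rightarrow> real) \<Rightarrow> real \<Rightarrow> real" where
  "lambda f f' R = Sup {t \<in> {0..<R}. kappa f R + f' t < 0}"

definition Theta :: "(real \<Rightarrow> real) \<Rightarrow> real \<Rightarrow> real" where
  "Theta f R = kappa f R / (2 - kappa f R)"

definition left_deriv :: "(real \<Rightarrow> real) \<Rightarrow> real \<Rightarrow> real" where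
  "left_deriv g x = Lim (at_left x) (\<lambda>s. (g s - g x) / (s - x))"

definition n_theta :: "(real \<Rightarrow> real) \<Rightarrow> (real \<Rightarrow> real) \<Rightarrow> real \<Rightarrow> real \<times> real \<Rightarrow> real \<times> real" where
  "n_theta f f' \<theta> p = (let t = fst p; \<epsilon> = snd p in
     (t - (1 + \<theta>) * (f t + \<epsilon>) / f' t, \<epsilon> + 2 * \<theta> * (f t + \<epsilon>)))"

definition Omega :: "(real \<Rightarrow> real) \<Rightarrow> (real \<Rightarrow> real) \<Rightarrow> real \<Rightarrow> (real \<times> real) set" where
  "Omega f f' R = {(t, \<epsilon>). 0 \<le> t \<and> t < lambda f f' R \<and> 0 \<le> \<epsilon> \<and> \<epsilon> \<le> kappa f R * t \<and> 0 < f t + \<epsilon>}"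

(* K(t,\<epsilon>); Finv stands for F'(x0)^{-1} *)
definition Kset :: "('a::banach \<Rightarrow> 'b::banach) \<Rightarrow> ('b \<Rightarrow>\<^sub>L 'a) \<Rightarrow> 'a \<Rightarrow> (real \<Rightarrow> real) \<Rightarrow> real \<Rightarrow> real \<Rightarrow> 'a set" where
  "Kset F Finv x0 f t \<epsilon> = {x. norm (x - x0) \<le> t \<and> norm (blinfun_apply Finv (F x)) \<le> f t + \<epsilon>}"

definition Nclass :: "('a::banach \<Rightarrow> 'b::banach) \<Rightarrow> ('a \<Rightarrow> ('a \<Rightarrow>\<^sub>L 'b)) \<Rightarrow> ('b \<Rightarrow>\<^sub>L 'a) \<Rightarrow> 'a \<Rightarrow> real \<Rightarrow> real \<Rightarrow> ('a \<Rightarrow> 'a) set" where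
  "Nclass F F' Finv x0 tb \<theta> = {N. \<forall>x\<in>ball x0 tb.
     norm (blinfun_apply Finv (F x + blinfun_apply (F' x) (N x - x))) \<le> \<theta> * norm (blinfun_apply Finv (F x))}"

end

theory Submission
  imports Defs
begin


locale maj =
  fixes f f' :: "real \<Rightarrow> real" and R :: real
  assumes f_deriv: "\<forall>s\<in>{0..<R}. (f has_real_derivative f' s) (at s within {0..<R})"
    and f'_cont: "continuous_on {0..<R} f'"
    and h1: "f 0 > 0" "f' 0 = -1"
    and h2: "strict_mono_on {0..<R} f'" "convex_on {0..<R} f'"
    and h3: "\<exists>s\<in>{0<..<R}. f s < 0"
begin

abbreviation "kap \<equiv> kappa f R"
abbreviation "lam \<equiv> lambda f f' R"

lemma R_pos: "0 < R" using h3 by auto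

lemma f'_strict: "0 \<le> a \<Longrightarrow> a < b \<Longrightarrow> b < R \<Longrightarrow> f' a < f' b"
  using h2(1) by (auto simp: strict_mono_on_def)

lemma f'_mono: "0 \<le> a \<Longrightarrow> a \<le> b \<Longrightarrow> b < R \<Longrightarrow> f' a \<le> f' b"
  using f'_strict by (cases "a = b") (auto simp: less_imp_le)

lemma f_at: "0 < s \<Longrightarrow> s < R \<Longrightarrow> (f has_real_derivative f' s) (at s)"
proof -
  assume "0 < s" "s < R"
  then have "s \<in> interior {0..<R}" by simp
  then have eq: "at s within {0..<R} = at s" by (rule at_within_interior)
  have "(f has_real_derivative f' s) (at s within {0..<R})" using f_deriv \<open>0 < s\<close> \<open>s < R\<close> by auto
  then show ?thesis by (simp only: eq)
qed

lemma f_cont: "continuous_on {0..<R} f"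
  unfolding continuous_on_eq_continuous_within
  using f_deriv DERIV_continuous by blast

lemma f_mvt: "0 \<le> a \<Longrightarrow> a < b \<Longrightarrow> b < R \<Longrightarrow> \<exists>c. a < c \<and> c < b \<and> f b - f a = (b - a) * f' c"
proof -
  assume ab: "0 \<le> a" "a < b" "b < R"
  have "continuous_on {a..b} f" using ab by (auto intro: continuous_on_subset[OF f_cont])
  moreover have "\<And>x. a < x \<Longrightarrow> x < b \<Longrightarrow> f differentiable (at x)"
  proof -
    fix x assume "a < x" "x < b"
    then have "DERIV f x :> f' x" using f_at ab by auto
    then show "f differentiable (at x)" unfolding real_differentiable_def by blast
  qed
  ultimately obtain l z where z: "a < z" "z < b" "DERIV f z :> l" "f b - f a = (b - a) * l"
    using MVT[OF \<open>a < b\<close>] by blast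
  have "DERIV f z :> f' z" using f_at z ab by auto
  with z(3) have "l = f' z" by (rule DERIV_unique)
  with z show ?thesis by blast
qed

lemma f_tangent_le: "0 \<le> a \<Longrightarrow> a \<le> b \<Longrightarrow> b < R \<Longrightarrow> f a + f' a * (b - a) \<le> f b"
proof (cases "a = b")
  case False
  assume ab: "0 \<le> a" "a \<le> b" "b < R"
  then obtain c where c: "a < c" "c < b" "f b - f a = (b - a) * f' c" using f_mvt False by force
  have "f' a \<le> f' c" using f'_mono c ab by auto
  then have "(b - a) * f' a \<le> (b - a) * f' c" using ab by (intro mult_left_mono) auto
  then show ?thesis using c by (simp add: algebra_simps)
qed simp

lemma f_tangent_ge: "0 \<le> a \<Longrightarrow> a \<le> b \<Longrightarrow> b < R \<Longrightarrow> f b \<le> f a + f' b * (b - a)"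
proof (cases "a = b")
  case False
  assume ab: "0 \<le> a" "a \<le> b" "b < R"
  then obtain c where c: "a < c" "c < b" "f b - f a = (b - a) * f' c" using f_mvt False by force
  have "f' c \<le> f' b" using f'_mono c ab by auto
  then have "(b - a) * f' c \<le> (b - a) * f' b" using ab by (intro mult_left_mono) auto
  then show ?thesis using c by (simp add: algebra_simps)
qed simp

lemma f_lower: "0 \<le> s \<Longrightarrow> s < R \<Longrightarrow> f 0 - s \<le> f s"
  using f_tangent_le[of 0 s] h1 by simp

lemma f'_ge: "0 \<le> s \<Longrightarrow> s < R \<Longrightarrow> -1 \<le> f' s"
  using f'_mono[of 0 s] h1 by simp

lemma f'_chord: "0 \<le> a \<Longrightarrow> a < s \<Longrightarrow> s < R \<Longrightarrow> 0 \<le> r \<Longrightarrow> r \<le> s - a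
   \<Longrightarrow> f' (a + r) \<le> f' a + r * ((f' s - f' a) / (s - a))"
proof -
  assume as: "0 \<le> a" "a < s" "s < R" "0 \<le> r" "r \<le> s - a"
  define u where "u = r / (s - a)"
  have u: "0 \<le> u" "u \<le> 1" using as by (auto simp: u_def field_simps)
  have "f' ((1 - u) *\<^sub>R a + u *\<^sub>R s) \<le> (1 - u) * f' a + u * f' s"
    using convex_onD[OF h2(2)] u as by auto
  moreover have "(1 - u) *\<^sub>R a + u *\<^sub>R s = a + u * (s - a)" by (simp add: algebra_simps)
  moreover have "u * (s - a) = r" using as by (simp add: u_def)
  moreover have "(1 - u) * f' a + u * f' s = f' a + u * (f' s - f' a)" by (simp add: algebra_simps)
  moreover have "u * (f' s - f' a) = r * ((f' s - f' a) / (s - a))" by (simp add: u_def)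
  ultimately show ?thesis by simp
qed

lemma incr_conv: "0 \<le> \<rho> \<Longrightarrow> \<rho> \<le> t \<Longrightarrow> 0 \<le> r \<Longrightarrow> t + r < R \<Longrightarrow> f' (\<rho> + r) - f' \<rho> \<le> f' (t + r) - f' t"
proof -
  assume as: "0 \<le> \<rho>" "\<rho> \<le> t" "0 \<le> r" "t + r < R"
  show ?thesis
  proof (cases "\<rho> = t \<or> r = 0")
    case True then show ?thesis by auto
  next
    case False
    then have lt: "\<rho> < t" "0 < r" using as by auto
    define L where "L = t + r - \<rho>"
    have L: "L > 0" using lt L_def by auto
    have 1: "f' (\<rho> + r) \<le> f' \<rho> + r * ((f' (t+r) - f' \<rho>) / L)"
      using f'_chord[of \<rho> "t+r" r] as lt unfolding L_def by auto
    have 2: "f' (\<rho> + (t - \<rho>)) \<le> f' \<rho> + (t - \<rho>) * ((f' (t+r) - f' \<rho>) / L)"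
      using f'_chord[of \<rho> "t+r" "t - \<rho>"] as lt unfolding L_def by auto
    define X where "X = (f' (t+r) - f' \<rho>) / L"
    have "r * X + (t - \<rho>) * X = L * X"
      unfolding L_def by (simp add: algebra_simps)
    also have "\<dots> = f' (t+r) - f' \<rho>" using L by (simp add: X_def)
    finally have "r * X + (t - \<rho>) * X = f' (t+r) - f' \<rho>" .
    then have 3: "r * ((f' (t+r) - f' \<rho>) / L) + (t - \<rho>) * ((f' (t+r) - f' \<rho>) / L) = f' (t+r) - f' \<rho>"
      by (simp only: X_def)
    then show ?thesis using 1 2 3 by simp
  qed
qed

lemma mono_deriv:
  fixes \<phi> \<phi>' :: "real \<Rightarrow> real"
  assumes "a \<le> b" "continuous_on {a..b} \<phi>"
    "\<And>x. a < x \<Longrightarrow> x < b \<Longrightarrow> (\<phi> has_real_derivative \<phi>' x) (at x)"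
    "\<And>x. a < x \<Longrightarrow> x < b \<Longrightarrow> 0 \<le> \<phi>' x"
  shows "\<phi> a \<le> \<phi> b"
  using DERIV_nonneg_imp_increasing_open[of a b \<phi>] assms by blast

lemma f_cont_shift: "0 \<le> t \<Longrightarrow> t + h < R \<Longrightarrow> continuous_on {a..h} (\<lambda>r. f (t + r))" if "0 \<le> a"
  using that by (intro continuous_on_compose2[OF f_cont]) (auto intro!: continuous_intros)

lemma f_at_shift: "0 \<le> t \<Longrightarrow> 0 < r \<Longrightarrow> t + r < R \<Longrightarrow> ((\<lambda>r. f (t + r)) has_real_derivative f' (t + r)) (at r)"
proof -
  assume as: "0 \<le> t" "0 < r" "t + r < R"
  have D: "(f has_real_derivative f' (t + r)) (at (t + r))" using f_at as by auto
  have D2: "((\<lambda>r. t + r) has_real_derivative 1) (at r)" by (auto intro!: derivative_eq_intros)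
  show ?thesis using DERIV_chain2[where g="\<lambda>r. t + r" and x=r, OF D D2] by simp
qed

lemma taylor_bound:
  assumes "0 \<le> t" "0 \<le> h" "t + h < R" "\<And>r. 0 \<le> r \<Longrightarrow> r \<le> h \<Longrightarrow> f' (t + r) \<le> f' t + c * r"
  shows "f (t + h) - f t - f' t * h \<le> c * h\<^sup>2 / 2"
proof -
  define \<phi> where "\<phi> r = c * r\<^sup>2 / 2 - (f (t + r) - f t - f' t * r)" for r
  have "\<phi> 0 \<le> \<phi> h"
  proof (rule mono_deriv[where \<phi> = \<phi> and a = 0 and b = h and \<phi>' = "\<lambda>r. c * r - f' (t + r) + f' t"])
    show "continuous_on {0..h} \<phi>" unfolding \<phi>_def
      using assms by (intro continuous_intros f_cont_shift) auto
    fix x assume x: "0 < x" "x < h"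
    show "(\<phi> has_real_derivative c * x - f' (t + x) + f' t) (at x)"
      unfolding \<phi>_def using x assms
      by (auto intro!: derivative_eq_intros f_at_shift simp: power2_eq_square)
    show "0 \<le> c * x - f' (t + x) + f' t" using assms(4)[of x] x by auto
  qed (use assms in auto)
  then show ?thesis by (simp add: \<phi>_def)
qed

lemma E_mono1:
  assumes "0 \<le> \<rho>" "0 \<le> a" "a \<le> h" "\<rho> + h < R"
  shows "f (\<rho> + a) - f \<rho> - f' \<rho> * a \<le> f (\<rho> + h) - f \<rho> - f' \<rho> * h"
proof -
  define \<phi> where "\<phi> r = f (\<rho> + r) - f \<rho> - f' \<rho> * r" for r
  have "\<phi> a \<le> \<phi> h"
  proof (rule mono_deriv[where \<phi> = \<phi> and a = a and b = h and \<phi>' = "\<lambda>r. f' (\<rho> + r) - f' \<rho>"])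
    show "continuous_on {a..h} \<phi>" unfolding \<phi>_def
      using assms by (intro continuous_intros f_cont_shift) auto
    fix x assume x: "a < x" "x < h"
    show "(\<phi> has_real_derivative f' (\<rho> + x) - f' \<rho>) (at x)"
      unfolding \<phi>_def using x assms
      by (auto intro!: derivative_eq_intros f_at_shift)
    show "0 \<le> f' (\<rho> + x) - f' \<rho>" using f'_mono[of \<rho> "\<rho> + x"] x assms by auto
  qed (use assms in auto)
  then show ?thesis by (simp add: \<phi>_def)
qed

lemma E_mono2:
  assumes "0 \<le> \<rho>" "\<rho> \<le> t" "0 \<le> h" "t + h < R"
  shows "f (\<rho> + h) - f \<rho> - f' \<rho> * h \<le> f (t + h) - f t - f' t * h"
proof -
  define \<phi> where "\<phi> r = (f (t + r) - f t - f' t * r) - (f (\<rho> + r) - f \<rho> - f' \<rho> * r)" for r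
  have "\<phi> 0 \<le> \<phi> h"
  proof (rule mono_deriv[where \<phi> = \<phi> and a = 0 and b = h and \<phi>' = "\<lambda>r. (f' (t + r) - f' t) - (f' (\<rho> + r) - f' \<rho>)"])
    show "continuous_on {0..h} \<phi>" unfolding \<phi>_def
      using assms by (intro continuous_intros f_cont_shift) auto
    fix x assume x: "0 < x" "x < h"
    show "(\<phi> has_real_derivative (f' (t + x) - f' t) - (f' (\<rho> + x) - f' \<rho>)) (at x)"
      unfolding \<phi>_def using x assms
      by (auto intro!: derivative_eq_intros f_at_shift)
    show "0 \<le> (f' (t + x) - f' t) - (f' (\<rho> + x) - f' \<rho>)" using incr_conv[of \<rho> t x] x assms by auto
  qed (use assms in auto)
  then show ?thesis by (simp add: \<phi>_def)
qed

lemma E_mono: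
  assumes "0 \<le> \<rho>" "\<rho> \<le> t" "0 \<le> a" "a \<le> h" "t + h < R"
  shows "f (\<rho> + a) - f \<rho> - f' \<rho> * a \<le> f (t + h) - f t - f' t * h"
  using E_mono1[of \<rho> a h] E_mono2[of \<rho> t h] assms by auto

lemma E_pos: "0 \<le> t \<Longrightarrow> 0 < h \<Longrightarrow> t + h < R \<Longrightarrow> 0 < f (t + h) - f t - f' t * h"
proof -
  assume as: "0 \<le> t" "0 < h" "t + h < R"
  then obtain c where c: "t < c" "c < t + h" "f (t+h) - f t = (t + h - t) * f' c" using f_mvt[of t "t+h"] by auto
  have "f' t < f' c" using f'_strict c as by auto
  then have "h * f' t < h * f' c" using as by auto
  then show ?thesis using c by (simp add: algebra_simps)
qed

end


context maj begin

lemma kap_bdd: "bdd_above ((\<lambda>t. - f t / t) ` {0<..<R})"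
proof (rule bdd_aboveI2[where M=1])
  fix t :: real assume t: "t \<in> {0<..<R}"
  then have "f 0 - t \<le> f t" using f_lower by auto
  then have "- f t \<le> t" using h1 by auto
  then show "- f t / t \<le> 1" using t by (auto simp: divide_simps)
qed

lemma kap_upper: "0 < s \<Longrightarrow> s < R \<Longrightarrow> - f s / s \<le> kap"
  unfolding kappa_def by (rule cSUP_upper[OF _ kap_bdd]) auto

lemma kap_least: "(\<And>s. 0 < s \<Longrightarrow> s < R \<Longrightarrow> - f s / s \<le> c) \<Longrightarrow> kap \<le> c"
  unfolding kappa_def using R_pos by (intro cSUP_least) auto

lemma g_nonneg: "0 \<le> s \<Longrightarrow> s < R \<Longrightarrow> 0 \<le> f s + kap * s"
proof (cases "s = 0")
  case True then show ?thesis using h1 by simp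
next
  case False
  assume "0 \<le> s" "s < R"
  then have "0 < s" using False by auto
  then have "- f s / s \<le> kap" using kap_upper \<open>s < R\<close> by auto
  then have "- f s \<le> kap * s" using \<open>0 < s\<close> by (simp add: divide_simps mult.commute)
  then show ?thesis by simp
qed

lemma kap_pos: "0 < kap"
proof -
  obtain s where s: "0 < s" "s < R" "f s < 0" using h3 by auto
  have "f s / s < 0" using s by (simp add: divide_neg_pos)
  then have "0 < - f s / s" by simp
  also have "\<dots> \<le> kap" using kap_upper s by auto
  finally show ?thesis .
qed

lemma kap_lt1: "kap < 1"
proof -
  have "kap \<le> 1 - f 0 / R"
  proof (rule kap_least)
    fix s assume s: "0 < s" "s < R"
    then have "f 0 - s \<le> f s" using f_lower by auto
    then have "- f s / s \<le> (s - f 0) / s" using s by (intro divide_right_mono) auto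
    also have "\<dots> = 1 - f 0 / s" using s by (simp add: field_simps)
    also have "f 0 / R \<le> f 0 / s" using s h1 by (intro divide_left_mono) auto
    then have "1 - f 0 / s \<le> 1 - f 0 / R" by simp
    finally show "- f s / s \<le> 1 - f 0 / R" .
  qed
  moreover have "0 < f 0 / R" using h1 R_pos by auto
  ultimately show ?thesis by simp
qed

definition "Lset = {t \<in> {0..<R}. kap + f' t < 0}"

lemma lam_def': "lam = Sup Lset" unfolding lambda_def Lset_def by simp

lemma Lset_bdd: "bdd_above Lset" unfolding Lset_def by (rule bdd_aboveI[where M=R]) auto

lemma Lset_0: "0 \<in> Lset" unfolding Lset_def using h1 kap_lt1 R_pos by auto

lemma lam_le_R: "lam \<le> R"
  unfolding lam_def' using Lset_0 by (intro cSup_least) (auto simp: Lset_def)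

lemma lam_upper: "0 \<le> t \<Longrightarrow> t < R \<Longrightarrow> kap + f' t < 0 \<Longrightarrow> t \<le> lam"
  unfolding lam_def' by (rule cSup_upper[OF _ Lset_bdd]) (auto simp: Lset_def)

lemma lam_nonneg: "0 \<le> lam" using lam_upper[of 0] h1 kap_lt1 R_pos by auto

lemma lam_mem: "0 \<le> t \<Longrightarrow> t < lam \<Longrightarrow> kap + f' t < 0"
proof -
  assume t: "0 \<le> t" "t < lam"
  then obtain s where s: "s \<in> Lset" "t < s" using less_cSupD[of Lset t] Lset_0 unfolding lam_def' by auto
  then have "f' t \<le> f' s" using t f'_mono[of t s] by (auto simp: Lset_def)
  then show ?thesis using s by (auto simp: Lset_def)
qed

lemma lam_R: "t < lam \<Longrightarrow> t < R" using lam_le_R by auto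

lemma cont_left_le:
  fixes \<phi> :: "real \<Rightarrow> real"
  assumes "continuous_on {0..<R} \<phi>" "0 < a" "a < R" "\<And>s. 0 \<le> s \<Longrightarrow> s < a \<Longrightarrow> \<phi> s \<le> c"
  shows "\<phi> a \<le> c"
proof (rule ccontr)
  assume "\<not> \<phi> a \<le> c"
  then have e: "0 < \<phi> a - c" by simp
  obtain d where d: "d > 0" "\<forall>x'\<in>{0..<R}. dist x' a < d \<longrightarrow> dist (\<phi> x') (\<phi> a) < \<phi> a - c"
    using assms(1) e assms(2,3) unfolding continuous_on_iff by (metis atLeastLessThan_iff less_imp_le)
  define s where "s = max 0 (a - d/2)"
  have s: "0 \<le> s" "s < a" "s < R" "dist s a < d" using d assms by (auto simp: s_def dist_real_def)
  then have "dist (\<phi> s) (\<phi> a) < \<phi> a - c" using d by auto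
  then have "\<phi> s > c" by (auto simp: dist_real_def)
  with assms(4)[OF s(1,2)] show False by simp
qed

lemma lam_pos: "0 < lam"
proof -
  have e: "0 < 1 - kap" using kap_lt1 by simp
  obtain d where d: "d > 0" "\<forall>x'\<in>{0..<R}. dist x' 0 < d \<longrightarrow> dist (f' x') (f' 0) < 1 - kap"
    using f'_cont e R_pos unfolding continuous_on_iff by (metis atLeastLessThan_iff order_refl)
  define s where "s = min (d/2) (R/2)"
  have s: "0 < s" "s < R" "dist s 0 < d" using d R_pos by (auto simp: s_def dist_real_def)
  then have "dist (f' s) (f' 0) < 1 - kap" using d by auto
  then have "kap + f' s < 0" using h1 by (auto simp: dist_real_def)
  then have "s \<le> lam" using lam_upper s by auto
  then show ?thesis using s by auto
qed

lemma f'_lam: "lam < R \<Longrightarrow> f' lam \<le> - kap"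
  using cont_left_le[OF f'_cont lam_pos, of "- kap"] lam_mem by force

lemma g_cont: "continuous_on {0..<R} (\<lambda>s. f s + kap * s)"
  using f_cont by (intro continuous_intros)

lemma g_decr: "0 \<le> a \<Longrightarrow> a \<le> b \<Longrightarrow> b < lam \<Longrightarrow> f b + kap * b \<le> f a + kap * a"
proof (cases "a = b")
  case False
  assume ab: "0 \<le> a" "a \<le> b" "b < lam"
  then obtain c where c: "a < c" "c < b" "f b - f a = (b - a) * f' c"
    using f_mvt[of a b] False lam_R by force
  have "kap + f' c < 0" using lam_mem c ab by auto
  then have "(b - a) * (kap + f' c) \<le> 0" using ab by (simp add: mult_nonneg_nonpos)
  then show ?thesis using c by (simp add: algebra_simps)
qed simp

lemma g_incr: "lam \<le> a \<Longrightarrow> a \<le> b \<Longrightarrow> b < R \<Longrightarrow> f a + kap * a \<le> f b + kap * b"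
proof -
  assume ab: "lam \<le> a" "a \<le> b" "b < R"
  show ?thesis
  proof (rule mono_deriv[where \<phi> = "\<lambda>s. f s + kap * s" and a = a and b = b and \<phi>' = "\<lambda>s. f' s + kap"])
    show "continuous_on {a..b} (\<lambda>s. f s + kap * s)"
      using ab lam_nonneg by (intro continuous_on_subset[OF g_cont]) auto
    fix x assume x: "a < x" "x < b"
    then show "((\<lambda>s. f s + kap * s) has_real_derivative f' x + kap) (at x)"
      using ab lam_nonneg by (auto intro!: derivative_eq_intros f_at)
    show "0 \<le> f' x + kap"
    proof (rule ccontr)
      assume "\<not> 0 \<le> f' x + kap"
      then have "x \<le> lam" using lam_upper[of x] x ab lam_nonneg by auto
      then show False using x ab by auto
    qed
  qed (use ab in auto)
qed

lemma g_small:
  assumes "0 < \<delta>" "0 \<le> t" "t < lam"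
  shows "\<exists>s. t \<le> s \<and> s < lam \<and> f s + kap * s < \<delta>"
proof (rule ccontr)
  assume "\<not> ?thesis"
  then have A: "\<And>s. t \<le> s \<Longrightarrow> s < lam \<Longrightarrow> \<delta> \<le> f s + kap * s" by force
  have B: "\<delta> \<le> f s + kap * s" if "0 \<le> s" "s < lam" for s
  proof (cases "t \<le> s")
    case True then show ?thesis using A that by auto
  next
    case False
    then have "f t + kap * t \<le> f s + kap * s" using g_decr[of s t] that assms by auto
    then show ?thesis using A[of t] assms by auto
  qed
  have C: "\<delta> \<le> f s + kap * s" if "0 < s" "s < R" for s
  proof (cases "s < lam")
    case True then show ?thesis using B that by auto
  next
    case False
    then have lR: "lam < R" using that by auto
    have "(\<lambda>s. - (f s + kap * s)) lam \<le> - \<delta>"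
      by (rule cont_left_le[where \<phi> = "\<lambda>s. - (f s + kap * s)" and a = lam and c = "- \<delta>"]) (use B lam_pos lR f_cont in \<open>auto intro!: continuous_intros g_cont, force\<close>)
    then have "\<delta> \<le> f lam + kap * lam" by simp
    also have "\<dots> \<le> f s + kap * s" using g_incr[of lam s] False that by auto
    finally show ?thesis .
  qed
  have "kap \<le> kap - \<delta> / R"
  proof (rule kap_least)
    fix s assume s: "0 < s" "s < R"
    have "\<delta> / R \<le> \<delta> / s" using s assms by (intro divide_left_mono) auto
    also have "\<dots> \<le> (f s + kap * s) / s" using C[OF s] s by (intro divide_right_mono) auto
    also have "\<dots> = f s / s + kap" using s by (simp add: field_simps)
    finally show "- f s / s \<le> kap - \<delta> / R" by simp
  qed
  moreover have "0 < \<delta> / R" using assms R_pos by auto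
  ultimately show False by simp
qed

end


context maj begin

lemma Theta_ineq: "0 \<le> \<theta> \<Longrightarrow> \<theta> \<le> Theta f R \<Longrightarrow> \<theta> * (2 - kap) \<le> kap"
  unfolding Theta_def using kap_lt1 by (simp add: field_simps)

lemma le_from_eps:
  fixes E u A c :: real
  assumes "0 \<le> E" "0 < c" "\<And>\<delta>. 0 < \<delta> \<Longrightarrow> \<delta> \<le> c \<Longrightarrow> E * (u - \<delta>) \<le> A"
  shows "E * u \<le> A"
proof (rule ccontr)
  assume "\<not> E * u \<le> A"
  then have gt: "A < E * u" by simp
  then have Epos: "0 < E" using assms(3)[of c] assms(2) \<open>0 \<le> E\<close>
    by (cases "E = 0") auto
  define \<delta> where "\<delta> = min c ((E * u - A) / (2 * E))"
  have d: "0 < \<delta>" "\<delta> \<le> c" using Epos gt assms by (auto simp: \<delta>_def)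
  have "E * \<delta> \<le> E * ((E * u - A) / (2 * E))" using Epos by (intro mult_left_mono) (auto simp: \<delta>_def)
  also have "\<dots> = (E * u - A) / 2" using Epos by simp
  finally have "A < E * (u - \<delta>)" using gt by (simp add: algebra_simps)
  with assms(3)[OF d] show False by simp
qed

lemma step_scalar:
  assumes th: "0 \<le> \<theta>" "\<theta> \<le> Theta f R" and t: "0 \<le> t" "t < lam"
    and e: "0 \<le> \<epsilon>" "\<epsilon> \<le> kap * t" and u: "0 < f t + \<epsilon>"
  defines "h \<equiv> (1 + \<theta>) * (f t + \<epsilon>) / (- f' t)"
  shows "0 < h" "t + h < lam" "f (t + h) - f t - f' t * h \<le> (1 - \<theta>)\<^sup>2 * (f t + \<epsilon>) / 2"
proof -
  define U where "U = f t + \<epsilon>"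
  define d where "d = - f' t"
  have dk: "kap < d" using lam_mem[OF t] by (simp add: d_def)
  have d1: "d \<le> 1" using f'_ge[of t] t lam_R by (simp add: d_def)
  have kp: "0 < kap" "kap < 1" using kap_pos kap_lt1 by auto
  have dpos: "0 < d" using dk kp by auto
  have U: "0 < U" using u by (simp add: U_def)
  have hU: "h = (1 + \<theta>) * U / d" by (simp add: h_def U_def d_def)
  have th2: "\<theta> * (2 - kap) \<le> kap" using Theta_ineq th by auto
  have Ug: "U \<le> f t + kap * t" using e by (simp add: U_def)
  define c0 where "c0 = (1 + \<theta>) * (d - kap) / d"
  have c0pos: "0 < c0" using th dk dpos by (simp add: c0_def)
  then have c0nn: "0 \<le> c0" by simp
  have thk: "\<theta> * d < kap * (1 + \<theta>)"
  proof -
    have "\<theta> * d \<le> \<theta>" using th d1 by (simp add: mult_left_le)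
    moreover have "\<theta> < kap * (1 + \<theta>)"
    proof (cases "\<theta> = 0")
      case True then show ?thesis using kp by simp
    next
      case False
      then have "0 < \<theta>" using th by simp
      then show ?thesis using th2 kp by (simp add: algebra_simps)
    qed
    ultimately show ?thesis by simp
  qed
  have c01: "c0 < 1"
  proof -
    have "(1 + \<theta>) * (d - kap) < d" using thk by (simp add: algebra_simps)
    then show ?thesis using dpos by (simp add: c0_def)
  qed
  have hd: "h * (d - kap) = c0 * U" using dpos by (simp add: hU c0_def)
  show hpos: "0 < h" using hU th U dpos by simp
  have key: "\<exists>s. t + h < s \<and> s < lam \<and> U - \<delta> < (s - t) * (d - kap)"
    if \<delta>: "0 < \<delta>" "\<delta> \<le> (1 - c0) * U" for \<delta>
  proof -
    obtain s where s: "t \<le> s" "s < lam" "f s + kap * s < \<delta>" using g_small[OF \<delta>(1) t] by blast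
    have gs: "f t + kap * t - (f s + kap * s) \<le> (s - t) * (d - kap)"
    proof (cases "s = t")
      case False
      have ts: "t < s" using False s by simp
      have sR: "s < R" using s lam_R by simp
      obtain c where c: "t < c" "c < s" "f s - f t = (s - t) * f' c"
        using f_mvt[OF t(1) ts sR] by blast
      have "f' t \<le> f' c" using f'_mono[of t c] c t s lam_R by auto
      then have "(s - t) * (- f' c - kap) \<le> (s - t) * (d - kap)"
        using c by (intro mult_left_mono) (auto simp: d_def)
      then show ?thesis using c by (simp add: algebra_simps)
    qed simp
    have 1: "U - \<delta> < (s - t) * (d - kap)" using gs Ug s by simp
    have "(1 - c0) * U = U - c0 * U" by (simp add: algebra_simps)
    then have "h * (d - kap) < (s - t) * (d - kap)" using 1 \<delta> hd by linarith
    then have "h < s - t" using dk by (intro mult_right_less_imp_less[of h "d - kap"]) auto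
    then show ?thesis using 1 s by (intro exI[of _ s]) auto
  qed
  have c0U: "0 < (1 - c0) * U" using c01 U by simp
  obtain s0 where "t + h < s0" "s0 < lam" using key[OF c0U] by auto
  then show "t + h < lam" by simp
  define E where "E = f (t + h) - f t - f' t * h"
  define A where "A = (d - kap)\<^sup>2 * h\<^sup>2 / 2"
  have Enn: "0 \<le> E" using E_pos[of t h] hpos \<open>t + h < lam\<close> t lam_R by (simp add: E_def)
  have EUd: "E * (U - \<delta>) \<le> A" if \<delta>: "0 < \<delta>" "\<delta> \<le> (1 - c0) * U" for \<delta>
  proof -
    obtain s where s: "t + h < s" "s < lam" "U - \<delta> < (s - t) * (d - kap)" using key[OF \<delta>] by blast
    have sR: "s < R" using s lam_R by auto
    have st: "0 < s - t" using s hpos by simp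
    have fs: "f' s < - kap" using lam_mem[of s] s t hpos by simp
    have "E \<le> (d - kap) / (s - t) * h\<^sup>2 / 2" unfolding E_def
    proof (rule taylor_bound)
      fix r assume r: "0 \<le> r" "r \<le> h"
      have "f' (t + r) \<le> f' t + r * ((f' s - f' t) / (s - t))"
        using f'_chord[of t s r] r s t sR hpos by auto
      also have "r * ((f' s - f' t) / (s - t)) \<le> r * ((d - kap) / (s - t))"
        using r st fs by (intro mult_left_mono divide_right_mono) (auto simp: d_def)
      finally show "f' (t + r) \<le> f' t + (d - kap) / (s - t) * r" by (simp add: mult.commute)
    qed (use t hpos sR s in auto)
    have "(1 - c0) * U < 1 * U" using c0pos U by (intro mult_strict_right_mono) auto
    then have Ud: "0 < U - \<delta>" using \<delta> c0nn U c01 by linarith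
    have "E * (U - \<delta>) \<le> ((d - kap) / (s - t) * h\<^sup>2 / 2) * (U - \<delta>)"
      using \<open>E \<le> _\<close> Ud by (intro mult_right_mono) auto
    also have "\<dots> \<le> ((d - kap) / (s - t) * h\<^sup>2 / 2) * ((s - t) * (d - kap))"
      using s(3) dk st by (intro mult_left_mono) auto
    also have "\<dots> = A" using st by (simp add: A_def power2_eq_square field_simps)
    finally show ?thesis .
  qed
  have EU: "E * U \<le> A" by (rule le_from_eps[OF Enn c0U EUd])
  have "A = (h * (d - kap))\<^sup>2 / 2" unfolding A_def by (simp add: power_mult_distrib)
  also have "\<dots> = (c0 * U)\<^sup>2 / 2" using hd by simp
  also have "\<dots> = (c0\<^sup>2 * U / 2) * U" by (simp add: power2_eq_square)
  finally have "E * U \<le> (c0\<^sup>2 * U / 2) * U" using EU by simp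
  then have "E \<le> c0\<^sup>2 * U / 2" using U by (rule mult_right_le_imp_le) 
  also have "c0 \<le> 1 - \<theta>"
  proof -
    have dd: "(d - kap) / d = 1 - kap / d" using dpos by (simp add: diff_divide_distrib)
    have "c0 = (1 + \<theta>) * ((d - kap) / d)" by (simp add: c0_def)
    also have "\<dots> = (1 + \<theta>) * (1 - kap / d)" by (simp only: dd)
    also have "kap \<le> kap / d" using d1 dpos kp by (simp add: le_divide_eq)
    then have "(1 + \<theta>) * (1 - kap / d) \<le> (1 + \<theta>) * (1 - kap)"
      using th by (intro mult_left_mono) auto
    also have "\<dots> \<le> 1 - \<theta>" using th2 by (simp add: algebra_simps)
    finally show ?thesis .
  qed
  then have "c0\<^sup>2 \<le> (1 - \<theta>)\<^sup>2" using c0nn by (intro power_mono) auto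
  then have "c0\<^sup>2 * U / 2 \<le> (1 - \<theta>)\<^sup>2 * U / 2" using U by (intro divide_right_mono mult_right_mono) auto
  finally show "f (t + h) - f t - f' t * h \<le> (1 - \<theta>)\<^sup>2 * (f t + \<epsilon>) / 2" by (simp add: E_def U_def)
qed

end



context maj begin
lemma step_Omega:
  assumes th: "0 \<le> \<theta>" "\<theta> \<le> Theta f R" and te: "(t, \<epsilon>) \<in> Omega f f' R"
    and nt: "(t', \<epsilon>') = n_theta f f' \<theta> (t, \<epsilon>)"
  shows "(t', \<epsilon>') \<in> Omega f f' R" "t < t'" "\<epsilon> \<le> \<epsilon>'"
    "t' = t + (1 + \<theta>) * (f t + \<epsilon>) / (- f' t)"
    "f t' + \<epsilon>' = \<theta> * (f t + \<epsilon>) + (f t' - f t - f' t * (t' - t))"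
    "f t' + \<epsilon>' \<le> (1 + \<theta>\<^sup>2) / 2 * (f t + \<epsilon>)"
proof -
  have t: "0 \<le> t" "t < lam" and e: "0 \<le> \<epsilon>" "\<epsilon> \<le> kap * t" and u: "0 < f t + \<epsilon>"
    using te by (auto simp: Omega_def)
  define h where "h = (1 + \<theta>) * (f t + \<epsilon>) / (- f' t)"
  note S = step_scalar[OF th t e u, folded h_def]
  have d: "0 < - f' t" using lam_mem[OF t] kap_pos by simp
  have nt': "t' = t - (1 + \<theta>) * (f t + \<epsilon>) / f' t \<and> \<epsilon>' = \<epsilon> + 2 * \<theta> * (f t + \<epsilon>)"
    using nt by (simp add: n_theta_def Let_def)
  have "t - (1 + \<theta>) * (f t + \<epsilon>) / f' t = t + (1 + \<theta>) * (f t + \<epsilon>) / (- f' t)" by simp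
  then have tt: "t' = t + h" using nt' unfolding h_def by simp
  have ee: "\<epsilon>' = \<epsilon> + 2 * \<theta> * (f t + \<epsilon>)" using nt' by simp
  show "t' = t + (1 + \<theta>) * (f t + \<epsilon>) / (- f' t)" using tt h_def by simp
  show "t < t'" using S tt by simp
  show "\<epsilon> \<le> \<epsilon>'" using ee th u by simp
  have fh: "f' t * h = - ((1 + \<theta>) * (f t + \<epsilon>))" using d by (simp add: h_def)
  show eq: "f t' + \<epsilon>' = \<theta> * (f t + \<epsilon>) + (f t' - f t - f' t * (t' - t))"
    using fh tt ee by (simp add: algebra_simps)
  have "f t' - f t - f' t * (t' - t) \<le> (1 - \<theta>)\<^sup>2 * (f t + \<epsilon>) / 2" using S tt by simp
  then show "f t' + \<epsilon>' \<le> (1 + \<theta>\<^sup>2) / 2 * (f t + \<epsilon>)" using eq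
    by (simp add: power2_eq_square algebra_simps)
  have Ep: "0 < f t' - f t - f' t * (t' - t)" using E_pos[of t h] S t tt lam_R by auto
  have "0 \<le> \<theta> * (f t + \<epsilon>)" using th u by simp
  then have pos: "0 < f t' + \<epsilon>'" using eq Ep by linarith
  have th2: "\<theta> * (2 - kap) \<le> kap" using Theta_ineq th by auto
  have d1: "- f' t \<le> 1" using f'_ge[of t] t lam_R by simp
  have "2 * \<theta> \<le> kap * (1 + \<theta>)" using th2 by (simp add: algebra_simps)
  also have "kap * (1 + \<theta>) \<le> kap * (1 + \<theta>) / (- f' t)"
  proof -
    have Xn: "0 \<le> kap * (1 + \<theta>)" using kap_pos th by simp
    have "kap * (1 + \<theta>) * (- f' t) \<le> kap * (1 + \<theta>)" using mult_left_le[OF d1 Xn] .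
    then show ?thesis by (simp only: pos_le_divide_eq[OF d])
  qed
  finally have "2 * \<theta> * (f t + \<epsilon>) \<le> kap * (1 + \<theta>) / (- f' t) * (f t + \<epsilon>)" using u by (intro mult_right_mono) auto
  also have "\<dots> = kap * h" by (simp add: h_def)
  finally have "\<epsilon>' \<le> kap * t'" using ee tt e by (simp add: algebra_simps)
  then show "(t', \<epsilon>') \<in> Omega f f' R"
    using S tt ee t e th u pos by (auto simp: Omega_def)
qed
end

locale NK = maj f f' R for f f' :: "real \<Rightarrow> real" and R :: real +
  fixes F :: "'a::banach \<Rightarrow> 'b::banach"
    and F' :: "'a \<Rightarrow> ('a \<Rightarrow>\<^sub>L 'b)"
    and Finv :: "'b \<Rightarrow>\<^sub>L 'a"
    and C :: "'a set" and x0 :: 'a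
  assumes F_deriv: "\<forall>x\<in>interior C. (F has_derivative blinfun_apply (F' x)) (at x)"
    and Finv_left: "Finv o\<^sub>L F' x0 = id_blinfun"
    and Finv_right: "F' x0 o\<^sub>L Finv = id_blinfun"
    and ball_C: "ball x0 R \<subseteq> C"
    and majorant: "\<forall>x\<in>ball x0 R. \<forall>z\<in>ball x0 R. norm (x - x0) + norm (z - x) < R \<longrightarrow>
        norm (Finv o\<^sub>L (F' z - F' x)) \<le> f' (norm (z - x) + norm (x - x0)) - f' (norm (x - x0))"
    and init: "norm (blinfun_apply Finv (F x0)) \<le> f 0"
begin

lemma Finv_F'x0: "Finv (F' x0 v) = v"
  using arg_cong[OF Finv_left, of "\<lambda>T. blinfun_apply T v"] by simp

lemma Finv_inj: "Finv w = 0 \<Longrightarrow> w = 0"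
  using arg_cong[OF Finv_right, of "\<lambda>T. blinfun_apply T w"] by simp

lemma F_der: "x \<in> ball x0 R \<Longrightarrow> (F has_derivative blinfun_apply (F' x)) (at x)"
proof -
  assume "x \<in> ball x0 R"
  moreover have "ball x0 R \<subseteq> interior C" using ball_C by (intro interior_maximal) auto
  ultimately show ?thesis using F_deriv by auto
qed

lemma F_cont_ball: "continuous_on (ball x0 R) F"
  unfolding continuous_on_eq_continuous_within
  using F_der has_derivative_continuous has_derivative_at_withinI by blast

lemma maj_x0: "x \<in> ball x0 R \<Longrightarrow> norm (Finv o\<^sub>L (F' x - F' x0)) \<le> f' (norm (x - x0)) + 1"
  using majorant[rule_format, of x0 x] h1 R_pos by (auto simp: dist_norm norm_minus_commute)

lemma F'_lower: "x \<in> ball x0 R \<Longrightarrow> - f' (norm (x - x0)) * norm v \<le> norm (Finv (F' x v))"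
proof -
  assume x: "x \<in> ball x0 R"
  have eq: "Finv (F' x v) = v + (Finv o\<^sub>L (F' x - F' x0)) v"
    by (simp add: blinfun.diff_left blinfun.diff_right Finv_F'x0)
  have "norm ((Finv o\<^sub>L (F' x - F' x0)) v) \<le> norm (Finv o\<^sub>L (F' x - F' x0)) * norm v" by (rule norm_blinfun)
  also have "\<dots> \<le> (f' (norm (x - x0)) + 1) * norm v" using maj_x0[OF x] by (intro mult_right_mono) auto
  finally have "norm ((Finv o\<^sub>L (F' x - F' x0)) v) \<le> (f' (norm (x - x0)) + 1) * norm v" .
  moreover have "norm v \<le> norm (Finv (F' x v)) + norm ((Finv o\<^sub>L (F' x - F' x0)) v)"
    using norm_triangle_ineq4[of "Finv (F' x v)" "(Finv o\<^sub>L (F' x - F' x0)) v"] eq by simp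
  ultimately show ?thesis by (simp add: algebra_simps)
qed

lemma F'_upper: "x \<in> ball x0 R \<Longrightarrow> norm (Finv (F' x v)) \<le> (2 + f' (norm (x - x0))) * norm v"
proof -
  assume x: "x \<in> ball x0 R"
  have eq: "Finv (F' x v) = v + (Finv o\<^sub>L (F' x - F' x0)) v"
    by (simp add: blinfun.diff_left blinfun.diff_right Finv_F'x0)
  have "norm ((Finv o\<^sub>L (F' x - F' x0)) v) \<le> norm (Finv o\<^sub>L (F' x - F' x0)) * norm v" by (rule norm_blinfun)
  also have "\<dots> \<le> (f' (norm (x - x0)) + 1) * norm v" using maj_x0[OF x] by (intro mult_right_mono) auto
  finally have "norm ((Finv o\<^sub>L (F' x - F' x0)) v) \<le> (f' (norm (x - x0)) + 1) * norm v" .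
  moreover have "norm (Finv (F' x v)) \<le> norm v + norm ((Finv o\<^sub>L (F' x - F' x0)) v)"
    using norm_triangle_ineq[of v "(Finv o\<^sub>L (F' x - F' x0)) v"] eq by simp
  ultimately show ?thesis by (simp add: algebra_simps)
qed

lemma seg_vd:
  assumes "(F has_derivative blinfun_apply Fd) (at (x + \<tau> *\<^sub>R w))"
  shows "((\<lambda>\<tau>. Finv (F (x + \<tau> *\<^sub>R w) - F x - \<tau> *\<^sub>R A w)) has_vector_derivative Finv (Fd w - A w)) (at \<tau>)"
proof -
  have p: "((\<lambda>\<tau>. x + \<tau> *\<^sub>R w) has_derivative (\<lambda>h. h *\<^sub>R w)) (at \<tau>)"
    by (auto intro!: derivative_eq_intros)
  have c: "((\<lambda>\<tau>. F (x + \<tau> *\<^sub>R w)) has_derivative (\<lambda>h. Fd (h *\<^sub>R w))) (at \<tau>)"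
    using has_derivative_compose[OF p assms] by simp
  have d: "((\<lambda>\<tau>. F (x + \<tau> *\<^sub>R w) - F x - \<tau> *\<^sub>R A w) has_derivative (\<lambda>h. Fd (h *\<^sub>R w) - 0 - h *\<^sub>R A w)) (at \<tau>)"
    by (intro has_derivative_diff c) (auto intro!: derivative_eq_intros)
  show ?thesis
  unfolding has_vector_derivative_def
  apply (rule has_derivative_eq_rhs)
  apply (rule bounded_linear.has_derivative[OF bounded_linear_blinfun_apply d])
  apply (auto simp: fun_eq_iff blinfun.scaleR_right blinfun.diff_right scaleR_right_diff_distrib blinfun.scaleR_left)
  done
qed

lemma seg_bound:
  fixes \<psi> \<psi>' :: "real \<Rightarrow> real"
  assumes seg: "\<And>\<tau>. 0 \<le> \<tau> \<Longrightarrow> \<tau> \<le> 1 \<Longrightarrow> x + \<tau> *\<^sub>R w \<in> ball x0 R"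
    and pc: "continuous_on {0..1} \<psi>"
    and pd: "\<And>\<tau>. 0 < \<tau> \<Longrightarrow> \<tau> < 1 \<Longrightarrow> (\<psi> has_real_derivative \<psi>' \<tau>) (at \<tau>)"
    and bnd: "\<And>\<tau>. 0 < \<tau> \<Longrightarrow> \<tau> < 1 \<Longrightarrow> norm (Finv (F' (x + \<tau> *\<^sub>R w) w - A w)) \<le> \<psi>' \<tau>"
  shows "norm (Finv (F (x + w) - F x - A w)) \<le> \<psi> 1 - \<psi> 0"
proof -
  define \<phi> where "\<phi> \<tau> = Finv (F (x + \<tau> *\<^sub>R w) - F x - \<tau> *\<^sub>R A w)" for \<tau>
  have "norm (\<phi> 1 - \<phi> 0) \<le> \<psi> 1 - \<psi> 0"
  proof (rule differentiable_bound_general[OF zero_less_one, where f' = "\<lambda>\<tau>. Finv (F' (x + \<tau> *\<^sub>R w) w - A w)" and \<phi>' = \<psi>'])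
    have "continuous_on {0..1} (\<lambda>\<tau>. x + \<tau> *\<^sub>R w)" by (intro continuous_intros)
    moreover have "(\<lambda>\<tau>. x + \<tau> *\<^sub>R w) ` {0..1} \<subseteq> ball x0 R" using seg by auto
    ultimately have "continuous_on {0..1} (\<lambda>\<tau>. F (x + \<tau> *\<^sub>R w))"
      using continuous_on_compose2[OF F_cont_ball] by blast
    then have c2: "continuous_on {0..1} (\<lambda>\<tau>. F (x + \<tau> *\<^sub>R w) - F x - \<tau> *\<^sub>R A w)"
      by (intro continuous_intros)
    show "continuous_on {0..1} \<phi>" unfolding \<phi>_def
      by (rule blinfun.continuous_on[OF continuous_on_const c2])
    show "continuous_on {0..1} \<psi>" by (rule pc)
    fix \<tau> :: real assume \<tau>: "0 < \<tau>" "\<tau> < 1"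
    show "(\<phi> has_vector_derivative Finv (F' (x + \<tau> *\<^sub>R w) w - A w)) (at \<tau>)"
      unfolding \<phi>_def by (rule seg_vd) (use F_der seg \<tau> in auto)
    show "(\<psi> has_vector_derivative \<psi>' \<tau>) (at \<tau>)"
      using pd[OF \<tau>] by (simp add: has_real_derivative_iff_has_vector_derivative)
    show "norm (Finv (F' (x + \<tau> *\<^sub>R w) w - A w)) \<le> \<psi>' \<tau>" using bnd \<tau> by auto
  qed
  then show ?thesis by (simp add: \<phi>_def)
qed

end


context NK begin

lemma remainder:
  assumes x: "x \<in> ball x0 R" and r: "norm (x - x0) + norm w < R"
  shows "norm (Finv (F (x + w) - F x - F' x w))
     \<le> f (norm (x - x0) + norm w) - f (norm (x - x0)) - f' (norm (x - x0)) * norm w"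
proof (cases "w = 0")
  case True then show ?thesis by simp
next
  case False
  define \<rho> where "\<rho> = norm (x - x0)"
  define n where "n = norm w"
  have n: "0 < n" using False by (simp add: n_def)
  have \<rho>: "0 \<le> \<rho>" by (simp add: \<rho>_def)
  have rn: "\<rho> + n < R" using r by (simp add: \<rho>_def n_def)
  have "norm (Finv (F (x + w) - F x - F' x w)) \<le>
     (f (\<rho> + 1 * n) - f' \<rho> * (1 * n)) - (f (\<rho> + 0 * n) - f' \<rho> * (0 * n))"
  proof (rule seg_bound[where \<psi> = "\<lambda>\<tau>. f (\<rho> + \<tau> * n) - f' \<rho> * (\<tau> * n)" and \<psi>' = "\<lambda>\<tau>. f' (\<rho> + \<tau> * n) * n - f' \<rho> * n"])
    fix \<tau> :: real assume \<tau>: "0 \<le> \<tau>" "\<tau> \<le> 1"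
    have "norm (x + \<tau> *\<^sub>R w - x0) \<le> \<rho> + norm (\<tau> *\<^sub>R w)"
      using norm_triangle_ineq[of "x - x0" "\<tau> *\<^sub>R w"] by (simp add: \<rho>_def algebra_simps)
    also have "\<dots> = \<rho> + \<tau> * n" using \<tau> by (simp add: n_def)
    also have "\<dots> \<le> \<rho> + n" using \<tau> n by (simp add: mult_left_le_one_le)
    finally show "x + \<tau> *\<^sub>R w \<in> ball x0 R" using rn by (simp add: dist_norm norm_minus_commute)
  next
    have "continuous_on {0..1} (\<lambda>\<tau>. f (\<rho> + \<tau> * n))"
    proof (rule continuous_on_compose2[OF f_cont])
      show "continuous_on {0..1} (\<lambda>\<tau>. \<rho> + \<tau> * n)" by (intro continuous_intros)
      show "(\<lambda>\<tau>. \<rho> + \<tau> * n) ` {0..1} \<subseteq> {0..<R}"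
      proof
        fix y assume "y \<in> (\<lambda>\<tau>. \<rho> + \<tau> * n) ` {0..1}"
        then obtain \<tau> where \<tau>: "0 \<le> \<tau>" "\<tau> \<le> 1" "y = \<rho> + \<tau> * n" by auto
        have tn: "\<tau> * n \<le> n" using \<tau> n by (simp add: mult_left_le_one_le)
        have "0 \<le> \<rho> + \<tau> * n" using \<tau> n \<rho> by simp
        moreover have "\<rho> + \<tau> * n < R" using tn rn by linarith
        ultimately show "y \<in> {0..<R}" by (simp add: \<tau>(3))
      qed
    qed
    then show "continuous_on {0..1} (\<lambda>\<tau>. f (\<rho> + \<tau> * n) - f' \<rho> * (\<tau> * n))"
      by (intro continuous_intros)
  next
    fix \<tau> :: real assume \<tau>: "0 < \<tau>" "\<tau> < 1"
    have tn: "\<tau> * n < n" using \<tau> n by simp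
    have D: "(f has_real_derivative f' (\<rho> + \<tau> * n)) (at (\<rho> + \<tau> * n))"
    proof -
      have "0 < \<rho> + \<tau> * n" using \<tau> n \<rho> by (simp add: add_nonneg_pos)
      moreover have "\<rho> + \<tau> * n < R" using tn rn by linarith
      ultimately show ?thesis by (rule f_at)
    qed
    have D2: "((\<lambda>\<tau>. \<rho> + \<tau> * n) has_real_derivative n) (at \<tau>)"
      by (auto intro!: derivative_eq_intros)
    have "((\<lambda>\<tau>. f (\<rho> + \<tau> * n)) has_real_derivative f' (\<rho> + \<tau> * n) * n) (at \<tau>)"
      using DERIV_chain2[where g="\<lambda>\<tau>. \<rho> + \<tau> * n" and x=\<tau>, OF D D2] by simp
    then show "((\<lambda>\<tau>. f (\<rho> + \<tau> * n) - f' \<rho> * (\<tau> * n)) has_real_derivative f' (\<rho> + \<tau> * n) * n - f' \<rho> * n) (at \<tau>)"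
      by (auto intro!: derivative_eq_intros)
    define z where "z = x + \<tau> *\<^sub>R w"
    have zx: "norm (z - x) = \<tau> * n" using \<tau> by (simp add: z_def n_def)
    have zb: "z \<in> ball x0 R"
    proof -
      have "norm (z - x0) \<le> \<rho> + norm (z - x)"
        using norm_triangle_ineq[of "x - x0" "z - x"] by (simp add: \<rho>_def algebra_simps)
      then show ?thesis using zx tn rn by (simp add: dist_norm norm_minus_commute)
    qed
    have M: "norm (Finv o\<^sub>L (F' z - F' x)) \<le> f' (\<tau> * n + \<rho>) - f' \<rho>"
      using majorant[rule_format, OF x zb] zx rn tn by (simp add: \<rho>_def)
    have "norm (Finv (F' z w - F' x w)) = norm ((Finv o\<^sub>L (F' z - F' x)) w)"
      by (simp add: blinfun.diff_left blinfun.diff_right)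
    also have "\<dots> \<le> norm (Finv o\<^sub>L (F' z - F' x)) * n" unfolding n_def by (rule norm_blinfun)
    also have "\<dots> \<le> (f' (\<tau> * n + \<rho>) - f' \<rho>) * n" using M n by (intro mult_right_mono) auto
    finally show "norm (Finv (F' (x + \<tau> *\<^sub>R w) w - F' x w)) \<le> f' (\<rho> + \<tau> * n) * n - f' \<rho> * n"
      by (simp add: z_def algebra_simps)
  qed
  then show ?thesis by (simp add: \<rho>_def n_def)
qed

lemma residual_lower:
  assumes x: "x \<in> ball x0 R"
  shows "- f (norm (x - x0)) \<le> norm (Finv (F x))"
proof -
  define \<rho> where "\<rho> = norm (x - x0)"
  have r: "norm (x0 - x0) + norm (x - x0) < R" using x by (simp add: dist_norm norm_minus_commute)
  have x0b: "x0 \<in> ball x0 R" using R_pos by simp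
  have rem: "norm (Finv (F x - F x0 - F' x0 (x - x0))) \<le> f \<rho> - f 0 + \<rho>"
    using remainder[OF x0b, of "x - x0"] r h1 by (simp add: \<rho>_def)
  have eq: "x - x0 = Finv (F x) - Finv (F x0) - Finv (F x - F x0 - F' x0 (x - x0))"
    by (simp add: blinfun.diff_right Finv_F'x0)
  have "\<rho> \<le> norm (Finv (F x)) + norm (Finv (F x0)) + norm (Finv (F x - F x0 - F' x0 (x - x0)))"
  proof -
    have "norm (Finv (F x) - Finv (F x0) - Finv (F x - F x0 - F' x0 (x - x0)))
       \<le> norm (Finv (F x) - Finv (F x0)) + norm (Finv (F x - F x0 - F' x0 (x - x0)))"
      by (rule norm_triangle_ineq4)
    also have "norm (Finv (F x) - Finv (F x0)) \<le> norm (Finv (F x)) + norm (Finv (F x0))"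
      by (rule norm_triangle_ineq4)
    finally show ?thesis unfolding \<rho>_def by (subst eq) simp
  qed
  then show ?thesis using rem init by (simp add: \<rho>_def)
qed

lemma lam_le_tbar: "lam \<le> tbar f' R"
  unfolding lam_def' tbar_def Lset_def
  by (rule cSup_subset_mono) (use Lset_0 kap_pos in \<open>auto simp: Lset_def intro!: bdd_aboveI[where M=R]\<close>)

lemma newton_step:
  assumes th: "0 \<le> \<theta>" "\<theta> \<le> Theta f R" and te: "(t, \<epsilon>) \<in> Omega f f' R"
    and nt: "(t', \<epsilon>') = n_theta f f' \<theta> (t, \<epsilon>)"
    and x: "x \<in> Kset F Finv x0 f t \<epsilon>"
    and N: "N \<in> Nclass F F' Finv x0 (tbar f' R) \<theta>"
  shows "norm (N x - x) \<le> t' - t" "N x \<in> Kset F Finv x0 f t' \<epsilon>'"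
proof -
  note S = step_Omega[OF th te nt]
  have t: "0 \<le> t" "t < lam" and u: "0 < f t + \<epsilon>" using te by (auto simp: Omega_def)
  define \<rho> where "\<rho> = norm (x - x0)"
  have \<rho>: "0 \<le> \<rho>" "\<rho> \<le> t" using x by (auto simp: Kset_def \<rho>_def)
  have Fx: "norm (Finv (F x)) \<le> f t + \<epsilon>" using x by (auto simp: Kset_def)
  have xb: "x \<in> ball x0 R" using \<rho> t lam_le_R by (simp add: dist_norm norm_minus_commute \<rho>_def)
  have xt: "x \<in> ball x0 (tbar f' R)" using \<rho> t lam_le_tbar by (simp add: dist_norm norm_minus_commute \<rho>_def)
  define s where "s = N x - x"
  define r where "r = Finv (F x + F' x s)"
  have rb: "norm r \<le> \<theta> * norm (Finv (F x))" using N xt by (auto simp: Nclass_def r_def s_def)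
  have "Finv (F' x s) = r - Finv (F x)" by (simp add: r_def blinfun.add_right)
  then have "norm (Finv (F' x s)) \<le> norm r + norm (Finv (F x))" by (simp add: norm_triangle_ineq4)
  also have "\<dots> \<le> (1 + \<theta>) * norm (Finv (F x))" using rb by (simp add: algebra_simps)
  also have "\<dots> \<le> (1 + \<theta>) * (f t + \<epsilon>)" using Fx th by (intro mult_left_mono) auto
  finally have A: "norm (Finv (F' x s)) \<le> (1 + \<theta>) * (f t + \<epsilon>)" .
  have d: "0 < - f' t" using lam_mem[OF t] kap_pos by simp
  have "- f' t \<le> - f' \<rho>" using f'_mono[of \<rho> t] \<rho> t lam_R by simp
  then have "- f' t * norm s \<le> - f' \<rho> * norm s" by (intro mult_right_mono) auto
  also have "\<dots> \<le> norm (Finv (F' x s))" using F'_lower[OF xb] by (simp add: \<rho>_def)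
  finally have "- f' t * norm s \<le> (1 + \<theta>) * (f t + \<epsilon>)" using A by simp
  then have "norm s * (- f' t) \<le> (1 + \<theta>) * (f t + \<epsilon>)" by (simp only: mult.commute)
  then have "norm s \<le> (1 + \<theta>) * (f t + \<epsilon>) / (- f' t)" by (simp only: pos_le_divide_eq[OF d])
  then show ns: "norm (N x - x) \<le> t' - t" using S(4) by (simp add: s_def)
  have t'R: "t' < R" using S(1) lam_le_R by (auto simp: Omega_def)
  have "norm (N x - x0) \<le> \<rho> + norm s"
    using norm_triangle_ineq[of "x - x0" "N x - x"] by (simp add: \<rho>_def s_def)
  also have "\<dots> \<le> t'" using ns \<rho> by (simp add: s_def)
  finally have nx: "norm (N x - x0) \<le> t'" .
  have rs: "\<rho> + norm s < R" using ns \<rho> t'R by (simp add: s_def)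
  have eqF: "Finv (F (N x)) = Finv (F (x + s) - F x - F' x s) + r"
    by (simp add: s_def r_def blinfun.diff_right blinfun.add_right)
  have "norm (Finv (F (N x))) \<le> norm (Finv (F (x + s) - F x - F' x s)) + norm r"
    unfolding eqF by (rule norm_triangle_ineq)
  also have "norm (Finv (F (x + s) - F x - F' x s)) \<le> f (\<rho> + norm s) - f \<rho> - f' \<rho> * norm s"
    using remainder[OF xb, of s] rs by (simp add: \<rho>_def)
  also have "\<dots> \<le> f (t + (t' - t)) - f t - f' t * (t' - t)"
    using E_mono[of \<rho> t "norm s" "t' - t"] \<rho> ns t'R by (simp add: s_def)
  also have "norm r \<le> \<theta> * (f t + \<epsilon>)" using rb Fx th by (meson mult_left_mono order_trans)
  finally have "norm (Finv (F (N x))) \<le> f t' + \<epsilon>'" using S(5) by simp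
  then show "N x \<in> Kset F Finv x0 f t' \<epsilon>'" using nx by (simp add: Kset_def)
qed

end


context maj begin

lemma left_deriv_ge:
  assumes lR: "lam < R" and a: "0 \<le> a" "a < lam"
  shows "(f' lam - f' a) / (lam - a) \<le> left_deriv f' lam"
proof -
  define Q where "Q s = (f' s - f' lam) / (s - lam)" for s
  have cv: "convex_on {0..<R} f'" using h2 by simp
  have l0: "0 < lam" using lam_pos .
  define b where "b = (lam + R) / 2"
  have b: "lam < b" "b < R" using lR by (auto simp: b_def)
  have Qmono: "Q s1 \<le> Q s2" if "0 \<le> s1" "s1 \<le> s2" "s2 < lam" for s1 s2
  proof (cases "s1 = s2")
    case False
    then show ?thesis using convex_on_slope_le(2)[OF cv, of s1 lam s2] that lR unfolding Q_def by auto
  qed simp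
  have Qbd: "Q s \<le> (f' lam - f' b) / (lam - b)" if "0 \<le> s" "s < lam" for s
  proof -
    have "Q s \<le> (f' s - f' b) / (s - b)"
      using convex_on_slope_le(1)[OF cv, of s b lam] that b unfolding Q_def by auto
    also have "\<dots> \<le> (f' lam - f' b) / (lam - b)"
      using convex_on_slope_le(2)[OF cv, of s b lam] that b by auto
    finally show ?thesis .
  qed
  have bdd: "bdd_above (Q ` {0..<lam})" using Qbd by (intro bdd_aboveI2) auto
  have ne: "{0..<lam} \<noteq> {}" using l0 by auto
  define L where "L = (SUP s\<in>{0..<lam}. Q s)"
  have lim: "(Q \<longlongrightarrow> L) (at_left lam)"
  proof (rule order_tendstoI)
    fix y assume "y < L"
    then obtain s0 where s0: "s0 \<in> {0..<lam}" "y < Q s0" using less_cSUP_iff[OF ne bdd] L_def by auto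
    have "eventually (\<lambda>x. x \<in> {s0<..<lam}) (at_left lam)" using s0 by (intro eventually_at_left_real) auto
    then show "eventually (\<lambda>x. y < Q x) (at_left lam)"
    proof eventually_elim
      case (elim x)
      then have "Q s0 \<le> Q x" using s0 by (intro Qmono) auto
      then show ?case using s0 by simp
    qed
  next
    fix y assume "L < y"
    have "eventually (\<lambda>x. x \<in> {0<..<lam}) (at_left lam)" using l0 by (intro eventually_at_left_real) auto
    then show "eventually (\<lambda>x. Q x < y) (at_left lam)"
    proof eventually_elim
      case (elim x)
      then have "Q x \<le> L" unfolding L_def using bdd by (intro cSUP_upper) auto
      then show ?case using \<open>L < y\<close> by simp
    qed
  qed
  have "left_deriv f' lam = L" unfolding left_deriv_def
    using tendsto_Lim[OF _ lim[unfolded Q_def]] by simp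
  moreover have "Q a \<le> L" unfolding L_def using a bdd by (intro cSUP_upper) auto
  moreover have "Q a = (f' lam - f' a) / (lam - a)" unfolding Q_def by (simp add: divide_simps) (simp add: algebra_simps)
  ultimately show ?thesis by simp
qed

lemma slope_le_left_deriv:
  assumes lR: "lam < R" and r: "0 \<le> \<rho>" "0 < e" "\<rho> + e \<le> lam"
  shows "(f' (\<rho> + e) - f' \<rho>) / e \<le> left_deriv f' lam"
proof -
  have cv: "convex_on {0..<R} f'" using h2 by simp
  have "(f' (\<rho> + e) - f' \<rho>) / e \<le> (f' lam - f' \<rho>) / (lam - \<rho>)"
  proof (cases "\<rho> + e = lam")
    case False
    then show ?thesis using convex_on_slope_le(1)[OF cv, of \<rho> lam "\<rho> + e"] r lR
      by (auto simp: divide_simps) (auto simp: algebra_simps)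
  next
    case True
    show ?thesis by (simp add: True[symmetric])
  qed
  also have "\<dots> \<le> left_deriv f' lam" using left_deriv_ge[OF lR, of \<rho>] r by auto
  finally show ?thesis .
qed

end



lemma rate_alg:
  fixes Dl D S LD e \<theta> :: real
  assumes "0 < Dl" "Dl \<le> D" "0 \<le> S" "S \<le> LD * e" "0 \<le> e" "0 \<le> \<theta>"
  shows "((1 + \<theta>) * (S * e / 2) + \<theta> * ((2 - D) * e)) / D \<le> ((1 + \<theta>) / 2 * (LD / Dl) * e + \<theta> * ((2 - Dl) / Dl)) * e"
proof -
  have D: "0 < D" using assms by simp
  have i: "1 / D \<le> 1 / Dl" using assms by (intro divide_left_mono) auto
  have a: "(1 + \<theta>) * (S * e / 2) / D \<le> (1 + \<theta>) * (S * e / 2) / Dl"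
    using assms by (intro divide_left_mono) auto
  have b: "(1 + \<theta>) * (S * e / 2) / Dl \<le> (1 + \<theta>) * (LD * e * e / 2) / Dl"
    using assms by (intro divide_right_mono mult_left_mono mult_right_mono) auto
  have c: "(2 - D) / D \<le> (2 - Dl) / Dl"
  proof -
    have "(2 - D) / D = 2 * (1 / D) - 1" using D by (simp add: field_simps)
    also have "\<dots> \<le> 2 * (1 / Dl) - 1" using i by simp
    also have "\<dots> = (2 - Dl) / Dl" using assms by (simp add: field_simps)
    finally show ?thesis .
  qed
  have c2: "\<theta> * ((2 - D) * e) / D \<le> \<theta> * ((2 - Dl) / Dl) * e"
  proof -
    have "\<theta> * ((2 - D) * e) / D = \<theta> * e * ((2 - D) / D)" by simp
    also have "\<dots> \<le> \<theta> * e * ((2 - Dl) / Dl)" using c assms by (intro mult_left_mono) auto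
    finally show ?thesis by (simp add: algebra_simps)
  qed
  have "((1 + \<theta>) * (S * e / 2) + \<theta> * ((2 - D) * e)) / D = (1 + \<theta>) * (S * e / 2) / D + \<theta> * ((2 - D) * e) / D"
    by (simp add: add_divide_distrib)
  also have "\<dots> \<le> (1 + \<theta>) * (LD * e * e / 2) / Dl + \<theta> * ((2 - Dl) / Dl) * e"
    using a b c2 by linarith
  also have "\<dots> = ((1 + \<theta>) / 2 * (LD / Dl) * e + \<theta> * ((2 - Dl) / Dl)) * e"
    by (simp add: algebra_simps)
  finally show ?thesis .
qed

lemma rate_alg2:
  fixes k D S e \<theta> :: real
  assumes "0 < k" "k \<le> D" "0 \<le> S" "S \<le> D" "0 \<le> e" "0 \<le> \<theta>"
  shows "((1 + \<theta>) * (S * e / 2) + \<theta> * ((2 - D) * e)) / D \<le> ((1 + \<theta>) / 2 + 2 * \<theta> / k) * e"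
proof -
  have D: "0 < D" using assms by simp
  have a: "(1 + \<theta>) * (S * e / 2) / D \<le> (1 + \<theta>) / 2 * e"
  proof -
    have "S / D \<le> 1" using assms D by simp
    then have "(1 + \<theta>) / 2 * e * (S / D) \<le> (1 + \<theta>) / 2 * e * 1" using assms by (intro mult_left_mono) auto
    moreover have "(1 + \<theta>) * (S * e / 2) / D = (1 + \<theta>) / 2 * e * (S / D)" by simp
    ultimately show ?thesis by (metis mult.right_neutral)
  qed
  have c: "(2 - D) / D \<le> 2 / k"
  proof -
    have "(2 - D) / D \<le> 2 / D" using D by (intro divide_right_mono) auto
    also have "\<dots> \<le> 2 / k" using assms by (intro divide_left_mono) auto
    finally show ?thesis .
  qed
  have c2: "\<theta> * ((2 - D) * e) / D \<le> 2 * \<theta> / k * e"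
  proof -
    have "\<theta> * ((2 - D) * e) / D = \<theta> * e * ((2 - D) / D)" by simp
    also have "\<dots> \<le> \<theta> * e * (2 / k)" using c assms by (intro mult_left_mono) auto
    finally show ?thesis by (simp add: algebra_simps)
  qed
  have "((1 + \<theta>) * (S * e / 2) + \<theta> * ((2 - D) * e)) / D = (1 + \<theta>) * (S * e / 2) / D + \<theta> * ((2 - D) * e) / D"
    by (simp add: add_divide_distrib)
  also have "\<dots> \<le> (1 + \<theta>) / 2 * e + 2 * \<theta> / k * e" using a c2 by linarith
  also have "\<dots> = ((1 + \<theta>) / 2 + 2 * \<theta> / k) * e" by (simp add: algebra_simps)
  finally show ?thesis .
qed

context NK begin

lemma main:
  fixes \<theta> :: real and N :: "'a \<Rightarrow> 'a" and t0 \<epsilon>0 :: real and y0 :: 'a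
    and y :: "nat \<Rightarrow> 'a" and t \<epsilon> :: "nat \<Rightarrow> real"
  assumes theta: "0 \<le> \<theta>" "\<theta> \<le> Theta f R"
    and N_in: "N \<in> Nclass F F' Finv x0 (tbar f' R) \<theta>"
    and start: "(t0, \<epsilon>0) \<in> Omega f f' R"
    and y0_in: "y0 \<in> Kset F Finv x0 f t0 \<epsilon>0"
    and y_0: "y 0 = y0" and y_Suc: "\<forall>k. y (Suc k) = N (y k)"
    and te_0: "(t 0, \<epsilon> 0) = (t0, \<epsilon>0)"
    and te_Suc: "\<forall>k. (t (Suc k), \<epsilon> (Suc k)) = n_theta f f' \<theta> (t k, \<epsilon> k)"
  shows "\<exists>tt ee xs.
     (\<forall>k. y k \<in> ball x0 (tbar f' R) \<and> t k < tbar f' R \<and> 0 \<le> \<epsilon> k) \<and>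
     (\<forall>k. y k \<in> Kset F Finv x0 f (t k) (\<epsilon> k) \<and> (t k, \<epsilon> k) \<in> Omega f f' R) \<and>
     strict_mono t \<and> t \<longlonglongrightarrow> tt \<and> 0 < tt \<and> tt \<le> lambda f f' R \<and>
     mono \<epsilon> \<and> \<epsilon> \<longlonglongrightarrow> ee \<and> 0 \<le> ee \<and> ee \<le> kappa f R * lambda f f' R \<and>
     (\<forall>k. norm (blinfun_apply Finv (F (y k))) \<le> f (t k) + \<epsilon> k \<and>
          f (t k) + \<epsilon> k \<le> ((1 + \<theta>\<^sup>2) / 2) ^ k * (f t0 + \<epsilon>0)) \<and>
     (\<forall>k. y k \<in> ball x0 (lambda f f' R)) \<and>
     y \<longlonglongrightarrow> xs \<and> xs \<in> cball x0 (tstar f R) \<and>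
     xs \<in> ball x0 (taubar f R) \<and> F xs = 0 \<and>
     (\<forall>z\<in>ball x0 (taubar f R). F z = 0 \<longrightarrow> z = xs) \<and>
     (\<forall>k. norm (y (Suc k) - y k) \<le> t (Suc k) - t k \<and> norm (xs - y k) \<le> tt - t k) \<and>
     (lambda f f' R < R \<longrightarrow> (\<forall>k. norm (xs - y (Suc k)) \<le>
        ((1 + \<theta>) / 2 * (left_deriv f' (lambda f f' R) / \<bar>f' (lambda f f' R)\<bar>) * norm (xs - y k)
          + \<theta> * ((2 + f' (lambda f f' R)) / \<bar>f' (lambda f f' R)\<bar>)) * norm (xs - y k))) \<and>
     (lambda f f' R < R \<and> \<theta> < kappa f R / (4 + kappa f R) \<longrightarrow>
        (\<forall>k. norm (xs - y (Suc k)) \<le> ((1 + \<theta>) / 2 + 2 * \<theta> / kappa f R) * norm (xs - y k)))"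
proof -
  define q where "q = (1 + \<theta>\<^sup>2) / 2"
  define u where "u k = f (t k) + \<epsilon> k" for k
  have P: "y k \<in> Kset F Finv x0 f (t k) (\<epsilon> k) \<and> (t k, \<epsilon> k) \<in> Omega f f' R" for k
  proof (induction k)
    case 0 then show ?case using y0_in start y_0 te_0 by simp
  next
    case (Suc k)
    then have "y (Suc k) \<in> Kset F Finv x0 f (t (Suc k)) (\<epsilon> (Suc k))"
      using newton_step(2)[OF theta _ te_Suc[rule_format] _ N_in] y_Suc by auto
    moreover have "(t (Suc k), \<epsilon> (Suc k)) \<in> Omega f f' R"
      using step_Omega(1)[OF theta _ te_Suc[rule_format]] Suc by auto
    ultimately show ?case by simp
  qed
  have K: "y k \<in> Kset F Finv x0 f (t k) (\<epsilon> k)" for k using P by simp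
  have Om: "(t k, \<epsilon> k) \<in> Omega f f' R" for k using P by simp
  have stepy: "norm (y (Suc k) - y k) \<le> t (Suc k) - t k" for k
    using newton_step(1)[OF theta Om te_Suc[rule_format] K N_in] y_Suc by auto
  have tinc: "t k < t (Suc k)" for k using step_Omega(2)[OF theta Om te_Suc[rule_format]] .
  have einc: "\<epsilon> k \<le> \<epsilon> (Suc k)" for k using step_Omega(3)[OF theta Om te_Suc[rule_format]] .
  have ustep: "u (Suc k) \<le> q * u k" for k
    using step_Omega(6)[OF theta Om te_Suc[rule_format]] by (simp add: u_def q_def)
  have tlam: "0 \<le> t k" "t k < lam" for k using Om[of k] by (auto simp: Omega_def)
  have eb: "0 \<le> \<epsilon> k" "\<epsilon> k \<le> kap * t k" "0 < u k" for k using Om[of k] by (auto simp: Omega_def u_def)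
  have ugeo: "u k \<le> q ^ k * u 0" for k
  proof (induction k)
    case (Suc k)
    have q0: "0 \<le> q" by (simp add: q_def)
    have "u (Suc k) \<le> q * u k" by (rule ustep)
    also have "\<dots> \<le> q * (q ^ k * u 0)" using Suc q0 by (intro mult_left_mono) auto
    finally show ?case by simp
  qed simp
  have u0: "u 0 = f t0 + \<epsilon>0" using te_0 by (simp add: u_def)
  have Kn: "norm (y k - x0) \<le> t k" "norm (Finv (F (y k))) \<le> u k" for k
    using K[of k] by (auto simp: Kset_def u_def)
  have th1: "\<theta> < 1"
  proof -
    have "\<theta> * (2 - kap) \<le> kap" using Theta_ineq theta by auto
    then show ?thesis using kap_lt1 kap_pos by (smt (verit) mult_le_cancel_left1)
  qed
  have q1: "q < 1" "0 \<le> q"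
  proof -
    have "\<theta>\<^sup>2 < 1" using th1 theta by (simp add: abs_square_less_1)
    then show "q < 1" "0 \<le> q" by (auto simp: q_def)
  qed
  have u_lim: "u \<longlonglongrightarrow> 0"
  proof -
    have "(\<lambda>k. q ^ k * u 0) \<longlonglongrightarrow> 0 * u 0" using q1 by (intro tendsto_intros) auto
    then have g: "(\<lambda>k. q ^ k * u 0) \<longlonglongrightarrow> 0" by simp
    show ?thesis
      by (rule Lim_null_comparison[OF _ g]) (use ugeo eb in \<open>auto intro!: always_eventually simp: less_imp_le\<close>)
  qed
  have smt: "strict_mono t" using tinc by (simp add: strict_mono_Suc_iff)
  have tinc': "incseq t" using smt by (simp add: strict_mono_mono)
  have tbdd: "bdd_above (range t)" using tlam by (intro bdd_aboveI2[where M = lam]) (auto simp: less_imp_le)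
  define tt where "tt = (SUP k. t k)"
  have tlim: "t \<longlonglongrightarrow> tt" unfolding tt_def by (rule LIMSEQ_incseq_SUP[OF tbdd tinc'])
  have ttle: "t k \<le> tt" for k unfolding tt_def by (rule cSUP_upper[OF _ tbdd]) auto
  have ttlam: "tt \<le> lam" unfolding tt_def using tlam by (intro cSUP_least) (auto simp: less_imp_le)
  have ttpos: "0 < tt" using tlam(1)[of 0] tinc[of 0] ttle[of 1] by simp
  have emono: "mono \<epsilon>" using einc by (simp add: mono_iff_le_Suc)
  have ebdd: "bdd_above (range \<epsilon>)"
  proof (rule bdd_aboveI2[where M = "kap * lam"])
    fix k
    have "kap * t k \<le> kap * lam" using tlam[of k] kap_pos by (intro mult_left_mono) auto
    then show "\<epsilon> k \<le> kap * lam" using eb[of k] by simp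
  qed
  define ee where "ee = (SUP k. \<epsilon> k)"
  have elim: "\<epsilon> \<longlonglongrightarrow> ee" unfolding ee_def by (rule LIMSEQ_incseq_SUP[OF ebdd]) (use emono in \<open>simp add: mono_def incseq_def\<close>)
  have eele: "\<epsilon> k \<le> ee" for k unfolding ee_def by (rule cSUP_upper[OF _ ebdd]) auto
  have ee0: "0 \<le> ee" using eele[of 0] eb[of 0] by simp
  have eelam: "ee \<le> kap * lam" unfolding ee_def
  proof (rule cSUP_least)
    fix k
    have "kap * t k \<le> kap * lam" using tlam[of k] kap_pos by (intro mult_left_mono) auto
    then show "\<epsilon> k \<le> kap * lam" using eb[of k] by simp
  qed simp
  have ydist: "norm (y m - y k) \<le> t m - t k" if "k \<le> m" for k m
    using that
  proof (induction m rule: dec_induct)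
    case (step m)
    have "norm (y (Suc m) - y k) \<le> norm (y (Suc m) - y m) + norm (y m - y k)"
      using norm_triangle_ineq[of "y (Suc m) - y m" "y m - y k"] by simp
    also have "\<dots> \<le> (t (Suc m) - t m) + (t m - t k)" using stepy step by (intro add_mono) auto
    finally show ?case by simp
  qed simp
  have "Cauchy y"
  proof (rule metric_CauchyI)
    fix e :: real assume e: "0 < e"
    obtain M where M: "\<forall>m\<ge>M. \<forall>n\<ge>M. dist (t m) (t n) < e"
      using LIMSEQ_imp_Cauchy[OF tlim] e unfolding Cauchy_def by blast
    show "\<exists>M. \<forall>m\<ge>M. \<forall>n\<ge>M. dist (y m) (y n) < e"
    proof (intro exI allI impI)
      fix m n assume mn: "M \<le> m" "M \<le> n"
      have "dist (y m) (y n) \<le> dist (t m) (t n)"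
      proof (cases "n \<le> m")
        case True
        then show ?thesis using ydist[OF True] tinc' by (simp add: dist_norm)
      next
        case False
        then have "m \<le> n" by simp
        then show ?thesis using ydist[OF \<open>m \<le> n\<close>] by (simp add: dist_norm norm_minus_commute)
      qed
      also have "\<dots> < e" using M mn by auto
      finally show "dist (y m) (y n) < e" .
    qed
  qed
  then obtain xs where ylim: "y \<longlonglongrightarrow> xs" using Cauchy_convergent_iff convergent_def by blast
  have xsd: "norm (xs - y k) \<le> tt - t k" for k
  proof (rule LIMSEQ_le[where X = "\<lambda>m. norm (y m - y k)" and Y = "\<lambda>m. t m - t k"])
    show "(\<lambda>m. norm (y m - y k)) \<longlonglongrightarrow> norm (xs - y k)" using ylim by (intro tendsto_intros)
    show "(\<lambda>m. t m - t k) \<longlonglongrightarrow> tt - t k" using tlim by (intro tendsto_intros)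
    show "\<exists>N. \<forall>n\<ge>N. norm (y n - y k) \<le> t n - t k" using ydist by blast
  qed
  have xs0: "norm (xs - x0) \<le> tt"
  proof (rule LIMSEQ_le[where X = "\<lambda>m. norm (y m - x0)" and Y = t])
    show "(\<lambda>m. norm (y m - x0)) \<longlonglongrightarrow> norm (xs - x0)" using ylim by (intro tendsto_intros)
  qed (use tlim Kn in auto)
  have yball: "y k \<in> ball x0 lam" for k using Kn(1)[of k] tlam[of k] by (simp add: dist_norm norm_minus_commute)
  have yR: "y k \<in> ball x0 R" for k using yball[of k] lam_le_R by auto
  obtain s1 where s1: "0 \<le> s1" "s1 < lam" "f s1 < 0"
  proof -
    have "0 < kap * lam / 2" using kap_pos lam_pos by simp
    then obtain s where s: "lam / 2 \<le> s" "s < lam" "f s + kap * s < kap * lam / 2"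
      using g_small[of "kap * lam / 2" "lam / 2"] lam_pos by auto
    have "kap * (lam / 2) \<le> kap * s" using s kap_pos by (intro mult_left_mono) auto
    then have "f s < 0" using s by simp
    moreover have "0 \<le> s" using s(1) lam_pos by linarith
    ultimately show ?thesis using that s(2) by blast
  qed
  have fdec: "f b < f a" if ab: "0 \<le> a" "a < b" "b < lam" for a b
  proof -
    obtain c where c: "a < c" "c < b" "f b - f a = (b - a) * f' c" using f_mvt[OF ab(1,2) lam_R[OF ab(3)]] by blast
    have "f' c < 0" using lam_mem[of c] c ab kap_pos by auto
    then have "(b - a) * f' c < 0" using ab by (simp add: mult_pos_neg)
    then show ?thesis using c by simp
  qed
  have "{0..s1} \<subseteq> {0..<R}" using s1 lam_R[of s1] by auto
  then have cs1: "continuous_on {0..s1} f" using continuous_on_subset[OF f_cont] by blast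
  obtain z0 where z0: "0 \<le> z0" "z0 \<le> s1" "f z0 = 0"
    using IVT2'[of f s1 0 0, OF _ _ s1(1) cs1] s1 h1 by force
  have z0lam: "z0 < lam" using z0 s1 by simp
  have tstar: "tstar f R = z0" unfolding tstar_def
  proof (rule cInf_eq_minimum)
    show "z0 \<in> {t \<in> {0..<R}. f t = 0}" using z0 z0lam lam_R by auto
    fix x assume x: "x \<in> {t \<in> {0..<R}. f t = 0}"
    show "z0 \<le> x"
    proof (rule ccontr)
      assume "\<not> z0 \<le> x"
      then have "f z0 < f x" using fdec[of x z0] x z0lam by auto
      then show False using x z0 by simp
    qed
  qed
  have Tbdd: "bdd_above {t \<in> {0..<R}. f t < 0}" by (rule bdd_aboveI[where M = R]) auto
  have tau_gt: "z0 < taubar f R"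
  proof -
    define s2 where "s2 = (z0 + lam) / 2"
    have s2: "z0 < s2" "s2 < lam" using z0lam by (auto simp: s2_def)
    have "f s2 < 0" using fdec[of z0 s2] s2 z0 by simp
    then have "s2 \<le> taubar f R" unfolding taubar_def using s2 z0 lam_R
      by (intro cSup_upper[OF _ Tbdd]) auto
    then show ?thesis using s2 by simp
  qed
  have s1T: "s1 \<in> {t \<in> {0..<R}. f t < 0}" using s1 lam_R[of s1] by auto
  have tau_R: "taubar f R \<le> R" unfolding taubar_def
    by (rule cSup_least) (use s1T in auto)
  have xsz: "norm (xs - x0) \<le> z0"
  proof (rule ccontr)
    assume "\<not> ?thesis"
    then have gt: "z0 < norm (xs - x0)" by simp
    define s where "s = (z0 + norm (xs - x0)) / 2"
    have s: "z0 < s" "s < norm (xs - x0)" using gt by (auto simp: s_def)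
    have slam: "s < lam" using s xs0 ttlam by simp
    have fs: "f s < 0" using fdec[of z0 s] s slam z0 by simp
    have "(\<lambda>k. norm (y k - x0)) \<longlonglongrightarrow> norm (xs - x0)" using ylim by (intro tendsto_intros)
    from order_tendstoD(1)[OF this s(2)] obtain M where M: "\<And>k. k \<ge> M \<Longrightarrow> s < norm (y k - x0)"
      unfolding eventually_sequentially by auto
    have "- f s \<le> u k" if "k \<ge> M" for k
    proof -
      have "f (norm (y k - x0)) \<le> f s"
        using fdec[of s "norm (y k - x0)"] M[OF that] Kn(1)[of k] tlam[of k] s z0 by fastforce
      moreover have "- f (norm (y k - x0)) \<le> u k"
        using residual_lower[OF yR[of k]] Kn(2)[of k] by simp
      ultimately show ?thesis by simp
    qed
    then have "- f s \<le> 0" using LIMSEQ_le_const[OF u_lim, of "- f s"] by blast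
    then show False using fs by simp
  qed
  have xsR: "xs \<in> ball x0 R" using xsz z0lam lam_le_R by (simp add: dist_norm norm_minus_commute)
  have xsball: "xs \<in> ball x0 (taubar f R)" using xsz tau_gt by (simp add: dist_norm norm_minus_commute)
  have xscball: "xs \<in> cball x0 (tstar f R)" using xsz tstar by (simp add: dist_norm norm_minus_commute)
  have Fxs: "F xs = 0"
  proof -
    have "isCont F xs" using F_der[OF xsR] has_derivative_continuous by blast
    then have "(\<lambda>k. F (y k)) \<longlonglongrightarrow> F xs" using ylim isCont_tendsto_compose by blast
    then have l1: "(\<lambda>k. Finv (F (y k))) \<longlonglongrightarrow> Finv (F xs)" by (intro tendsto_intros)
    have l2: "(\<lambda>k. Finv (F (y k))) \<longlonglongrightarrow> 0"
      by (rule Lim_null_comparison[OF _ u_lim]) (use Kn in auto)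
    have "Finv (F xs) = 0" using LIMSEQ_unique[OF l1 l2] .
    then show ?thesis by (rule Finv_inj)
  qed
  have z0R: "z0 < R" using z0lam lam_le_R by simp
  have f'z0: "f' z0 < 0" using lam_mem[of z0] z0 z0lam kap_pos by simp
  have uniq: "z = xs" if z: "z \<in> ball x0 (taubar f R)" "F z = 0" for z
  proof -
    define \<rho> where "\<rho> = norm (z - x0)"
    have \<rho>: "\<rho> < taubar f R" using z by (simp add: \<rho>_def dist_norm norm_minus_commute)
    have zR: "z \<in> ball x0 R" using \<rho> tau_R by (simp add: \<rho>_def dist_norm norm_minus_commute)
    have fr: "0 \<le> f \<rho>" using residual_lower[OF zR] z by (simp add: \<rho>_def)
    have \<rho>z: "\<rho> \<le> z0"
    proof (rule ccontr)
      assume "\<not> ?thesis"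
      then have gt: "z0 < \<rho>" by simp
      obtain s where s: "s \<in> {t \<in> {0..<R}. f t < 0}" "\<rho> < s"
      proof -
        have ne: "{t \<in> {0..<R}. f t < 0} \<noteq> {}" using s1T by blast
        have "\<rho> < Sup {t \<in> {0..<R}. f t < 0}" using \<rho> unfolding taubar_def .
        then show ?thesis using less_cSupD[OF ne] that by blast
      qed
      have "f \<rho> \<le> f z0 + f' \<rho> * (\<rho> - z0)" using f_tangent_ge[of z0 \<rho>] gt z0 s by auto
      then have "0 \<le> f' \<rho> * (\<rho> - z0)" using fr z0 by simp
      then have "0 \<le> f' \<rho>" using gt by (simp add: zero_le_mult_iff)
      then have "0 \<le> f' \<rho> * (s - \<rho>)" using s by simp
      then have "f \<rho> \<le> f s" using f_tangent_le[of \<rho> s] s gt z0 by auto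
      then show False using fr s by simp
    qed
    define w where "w = z - xs"
    define B where "B = f' z0 + 1"
    have "norm (Finv (F (xs + w) - F xs - F' x0 w)) \<le> (1 * B * norm w) - (0 * B * norm w)"
    proof (rule seg_bound[where \<psi> = "\<lambda>\<tau>. \<tau> * B * norm w" and \<psi>' = "\<lambda>\<tau>. B * norm w"])
      fix \<tau> :: real assume \<tau>: "0 \<le> \<tau>" "\<tau> \<le> 1"
      have "xs + \<tau> *\<^sub>R w - x0 = (1 - \<tau>) *\<^sub>R (xs - x0) + \<tau> *\<^sub>R (z - x0)"
        by (simp add: w_def algebra_simps)
      then have "norm (xs + \<tau> *\<^sub>R w - x0) \<le> (1 - \<tau>) * norm (xs - x0) + \<tau> * norm (z - x0)"
        using norm_triangle_ineq[of "(1 - \<tau>) *\<^sub>R (xs - x0)" "\<tau> *\<^sub>R (z - x0)"] \<tau> by simp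
      also have "\<dots> \<le> (1 - \<tau>) * z0 + \<tau> * z0"
        using \<tau> xsz \<rho>z by (intro add_mono mult_left_mono) (auto simp: \<rho>_def)
      finally have "norm (xs + \<tau> *\<^sub>R w - x0) \<le> z0" by (simp add: algebra_simps)
      then show "xs + \<tau> *\<^sub>R w \<in> ball x0 R" using z0R by (simp add: dist_norm norm_minus_commute)
      note this_seg = this
    next
      show "continuous_on {0..1} (\<lambda>\<tau>. \<tau> * B * norm w)" by (intro continuous_intros)
    next
      fix \<tau> :: real assume \<tau>: "0 < \<tau>" "\<tau> < 1"
      show "((\<lambda>\<tau>. \<tau> * B * norm w) has_real_derivative B * norm w) (at \<tau>)"
        by (auto intro!: derivative_eq_intros)
      define p where "p = xs + \<tau> *\<^sub>R w"
      have "p - x0 = (1 - \<tau>) *\<^sub>R (xs - x0) + \<tau> *\<^sub>R (z - x0)"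
        by (simp add: p_def w_def algebra_simps)
      then have "norm (p - x0) \<le> (1 - \<tau>) * norm (xs - x0) + \<tau> * norm (z - x0)"
        using norm_triangle_ineq[of "(1 - \<tau>) *\<^sub>R (xs - x0)" "\<tau> *\<^sub>R (z - x0)"] \<tau> by simp
      also have "\<dots> \<le> (1 - \<tau>) * z0 + \<tau> * z0"
        using \<tau> xsz \<rho>z by (intro add_mono mult_left_mono) (auto simp: \<rho>_def)
      finally have pz: "norm (p - x0) \<le> z0" by (simp add: algebra_simps)
      then have pb: "p \<in> ball x0 R" using z0R by (simp add: dist_norm norm_minus_commute)
      have "norm (Finv (F' p w - F' x0 w)) = norm ((Finv o\<^sub>L (F' p - F' x0)) w)"
        by (simp add: blinfun.diff_left blinfun.diff_right)
      also have "\<dots> \<le> norm (Finv o\<^sub>L (F' p - F' x0)) * norm w" by (rule norm_blinfun)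
      also have "\<dots> \<le> (f' (norm (p - x0)) + 1) * norm w" using maj_x0[OF pb] by (intro mult_right_mono) auto
      also have "\<dots> \<le> B * norm w" unfolding B_def using f'_mono[of "norm (p - x0)" z0] pz z0R
        by (intro mult_right_mono) auto
      finally show "norm (Finv (F' (xs + \<tau> *\<^sub>R w) w - F' x0 w)) \<le> B * norm w" by (simp add: p_def)
    qed
    moreover have "Finv (F (xs + w) - F xs - F' x0 w) = - w"
      using z Fxs by (simp add: w_def blinfun.diff_right Finv_F'x0)
    ultimately have "norm w \<le> B * norm w" by simp
    then have "norm w = 0" using f'z0 unfolding B_def
      by (smt (verit) mult_le_cancel_right1 norm_ge_zero)
    then show ?thesis by (simp add: w_def)
  qed
  have rate_base: "- f' (norm (y k - x0)) * norm (xs - y (Suc k))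
      \<le> (1 + \<theta>) * (f (norm (y k - x0) + norm (xs - y k)) - f (norm (y k - x0)) - f' (norm (y k - x0)) * norm (xs - y k))
         + \<theta> * ((2 + f' (norm (y k - x0))) * norm (xs - y k))"
    if lR: "lam < R" for k
  proof -
    define x where "x = y k"
    define \<rho> where "\<rho> = norm (x - x0)"
    define e where "e = norm (xs - x)"
    define s where "s = N x - x"
    define r where "r = Finv (F x + F' x s)"
    define Er where "Er = Finv (F (x + (xs - x)) - F x - F' x (xs - x))"
    have xb: "x \<in> ball x0 R" using yR by (simp add: x_def)
    have "dist x0 x < lam" using yball[of k] by (simp add: x_def)
    then have xt: "x \<in> ball x0 (tbar f' R)" using lam_le_tbar by simp
    have re: "\<rho> + e \<le> tt" using Kn(1)[of k] xsd[of k] by (simp add: \<rho>_def e_def x_def)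
    have reR: "\<rho> + e < R" using re ttlam lR by simp
    have Erb: "norm Er \<le> f (\<rho> + e) - f \<rho> - f' \<rho> * e"
      using remainder[OF xb, of "xs - x"] reR by (simp add: Er_def \<rho>_def e_def)
    have rb: "norm r \<le> \<theta> * norm (Finv (F x))" using N_in xt by (auto simp: Nclass_def r_def s_def)
    have Fx: "Finv (F x) = - Finv (F' x (xs - x)) - Er"
      using Fxs by (simp add: Er_def blinfun.diff_right blinfun.minus_right)
    have Fxb: "norm (Finv (F x)) \<le> (2 + f' \<rho>) * e + norm Er"
    proof -
      have "norm (Finv (F x)) \<le> norm (- Finv (F' x (xs - x))) + norm Er"
        unfolding Fx by (rule norm_triangle_ineq4)
      then have "norm (Finv (F x)) \<le> norm (Finv (F' x (xs - x))) + norm Er" by simp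
      also have "norm (Finv (F' x (xs - x))) \<le> (2 + f' \<rho>) * e"
        using F'_upper[OF xb] by (simp add: \<rho>_def e_def)
      finally show ?thesis by simp
    qed
    have eqv: "Finv (F' x (xs - N x)) = - Er - r"
      using Fxs by (simp add: Er_def r_def s_def blinfun.diff_right blinfun.add_right blinfun.minus_right)
    have "- f' \<rho> * norm (xs - N x) \<le> norm (Finv (F' x (xs - N x)))"
      using F'_lower[OF xb] by (simp add: \<rho>_def)
    also have "\<dots> \<le> norm Er + norm r" unfolding eqv
      using norm_triangle_ineq4[of "- Er" r] by simp
    also have "\<dots> \<le> norm Er + \<theta> * ((2 + f' \<rho>) * e + norm Er)"
      using rb Fxb theta by (smt (verit) mult_left_mono)
    also have "\<dots> = (1 + \<theta>) * norm Er + \<theta> * ((2 + f' \<rho>) * e)" by (simp add: algebra_simps)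
    also have "\<dots> \<le> (1 + \<theta>) * (f (\<rho> + e) - f \<rho> - f' \<rho> * e) + \<theta> * ((2 + f' \<rho>) * e)"
      using Erb theta by (intro add_right_mono mult_left_mono) auto
    finally show ?thesis using y_Suc by (simp add: x_def \<rho>_def e_def norm_minus_commute)
  qed
  have rate_pre: "norm (xs - y (Suc k)) \<le> ((1 + \<theta>) * ((f' (norm (y k - x0) + norm (xs - y k)) - f' (norm (y k - x0))) * norm (xs - y k) / 2)
         + \<theta> * ((2 + f' (norm (y k - x0))) * norm (xs - y k))) / (- f' (norm (y k - x0)))"
    and D_ge: "- f' lam \<le> - f' (norm (y k - x0))" and rle: "norm (y k - x0) + norm (xs - y k) \<le> lam"
    if lR: "lam < R" for k
  proof -
    define \<rho> where "\<rho> = norm (y k - x0)"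
    define e where "e = norm (xs - y k)"
    have \<rho>0: "0 \<le> \<rho>" and \<rho>lam: "\<rho> < lam" using Kn(1)[of k] tlam[of k] by (auto simp: \<rho>_def)
    have re: "\<rho> + e \<le> lam" using Kn(1)[of k] xsd[of k] ttlam by (simp add: \<rho>_def e_def)
    then show "norm (y k - x0) + norm (xs - y k) \<le> lam" by (simp add: \<rho>_def e_def)
    have reR: "\<rho> + e < R" using re lR by simp
    have D: "- f' lam \<le> - f' \<rho>" using f'_mono[of \<rho> lam] \<rho>0 \<rho>lam lR by simp
    then show "- f' lam \<le> - f' (norm (y k - x0))" by (simp add: \<rho>_def)
    have Dpos: "0 < - f' \<rho>" using D f'_lam[OF lR] kap_pos by simp
    have Eb: "f (\<rho> + e) - f \<rho> - f' \<rho> * e \<le> (f' (\<rho> + e) - f' \<rho>) * e / 2"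
    proof (cases "e = 0")
      case True then show ?thesis by simp
    next
      case False
      then have e0: "0 < e" by (simp add: e_def)
      have "f (\<rho> + e) - f \<rho> - f' \<rho> * e \<le> ((f' (\<rho> + e) - f' \<rho>) / e) * e\<^sup>2 / 2"
      proof (rule taylor_bound)
        fix r assume r: "0 \<le> r" "r \<le> e"
        show "f' (\<rho> + r) \<le> f' \<rho> + (f' (\<rho> + e) - f' \<rho>) / e * r"
          using f'_chord[of \<rho> "\<rho> + e" r] r e0 \<rho>0 reR by (simp add: mult.commute)
      qed (use \<rho>0 e0 reR in auto)
      also have "\<dots> = (f' (\<rho> + e) - f' \<rho>) * e / 2" using e0 by (simp add: power2_eq_square)
      finally show ?thesis .
    qed
    have "- f' \<rho> * norm (xs - y (Suc k)) \<le> (1 + \<theta>) * ((f' (\<rho> + e) - f' \<rho>) * e / 2) + \<theta> * ((2 + f' \<rho>) * e)"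
      using rate_base[OF lR, of k] Eb theta unfolding \<rho>_def[symmetric] e_def[symmetric]
      by (smt (verit) mult_left_mono)
    then show "norm (xs - y (Suc k)) \<le> ((1 + \<theta>) * ((f' (norm (y k - x0) + norm (xs - y k)) - f' (norm (y k - x0))) * norm (xs - y k) / 2)
         + \<theta> * ((2 + f' (norm (y k - x0))) * norm (xs - y k))) / (- f' (norm (y k - x0)))"
      unfolding \<rho>_def[symmetric] e_def[symmetric] pos_le_divide_eq[OF Dpos] by (simp only: mult.commute)
  qed
  have rate1: "norm (xs - y (Suc k)) \<le>
        ((1 + \<theta>) / 2 * (left_deriv f' lam / \<bar>f' lam\<bar>) * norm (xs - y k)
          + \<theta> * ((2 + f' lam) / \<bar>f' lam\<bar>)) * norm (xs - y k)" if lR: "lam < R" for k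
  proof -
    define \<rho> where "\<rho> = norm (y k - x0)"
    define e where "e = norm (xs - y k)"
    define S where "S = f' (\<rho> + e) - f' \<rho>"
    have \<rho>0: "0 \<le> \<rho>" by (simp add: \<rho>_def)
    have re: "\<rho> + e \<le> lam" using rle[OF lR, of k] by (simp add: \<rho>_def e_def)
    have Dl: "0 < - f' lam" using f'_lam[OF lR] kap_pos by simp
    have abs: "\<bar>f' lam\<bar> = - f' lam" using Dl by simp
    have S0: "0 \<le> S" using f'_mono[of \<rho> "\<rho> + e"] \<rho>0 re lR by (simp add: S_def e_def)
    have SL: "S \<le> left_deriv f' lam * e"
    proof (cases "e = 0")
      case True then show ?thesis by (simp add: S_def)
    next
      case False
      then have e0: "0 < e" by (simp add: e_def)
      have "S / e \<le> left_deriv f' lam" using slope_le_left_deriv[OF lR \<rho>0 e0 re] by (simp add: S_def)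
      then show ?thesis using e0 by (simp add: divide_le_eq)
    qed
    have "norm (xs - y (Suc k)) \<le> ((1 + \<theta>) * (S * e / 2) + \<theta> * ((2 - (- f' \<rho>)) * e)) / (- f' \<rho>)"
      using rate_pre(1)[OF lR, of k] by (simp add: \<rho>_def e_def S_def)
    also have "\<dots> \<le> ((1 + \<theta>) / 2 * (left_deriv f' lam / (- f' lam)) * e + \<theta> * ((2 - (- f' lam)) / (- f' lam))) * e"
    proof (rule rate_alg[OF Dl _ S0 SL _ theta(1)])
      show "- f' lam \<le> - f' \<rho>" using D_ge[OF lR, of k] by (simp add: \<rho>_def)
    qed (simp add: e_def)
    finally show ?thesis by (simp add: abs e_def)
  qed
  have rate2: "norm (xs - y (Suc k)) \<le> ((1 + \<theta>) / 2 + 2 * \<theta> / kap) * norm (xs - y k)"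
    if lR: "lam < R" for k
  proof -
    define \<rho> where "\<rho> = norm (y k - x0)"
    define e where "e = norm (xs - y k)"
    define S where "S = f' (\<rho> + e) - f' \<rho>"
    have \<rho>0: "0 \<le> \<rho>" by (simp add: \<rho>_def)
    have re: "\<rho> + e \<le> lam" using rle[OF lR, of k] by (simp add: \<rho>_def e_def)
    have S0: "0 \<le> S" using f'_mono[of \<rho> "\<rho> + e"] \<rho>0 re lR by (simp add: S_def e_def)
    have "f' (\<rho> + e) \<le> f' lam" using f'_mono[of "\<rho> + e" lam] \<rho>0 re lR by (simp add: e_def)
    then have SD: "S \<le> - f' \<rho>" using f'_lam[OF lR] kap_pos by (simp add: S_def)
    have kD: "kap \<le> - f' \<rho>" using D_ge[OF lR, of k] f'_lam[OF lR] by (simp add: \<rho>_def)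
    have "norm (xs - y (Suc k)) \<le> ((1 + \<theta>) * (S * e / 2) + \<theta> * ((2 - (- f' \<rho>)) * e)) / (- f' \<rho>)"
      using rate_pre(1)[OF lR, of k] by (simp add: \<rho>_def e_def S_def)
    also have "\<dots> \<le> ((1 + \<theta>) / 2 + 2 * \<theta> / kap) * e"
      by (rule rate_alg2[OF kap_pos kD S0 SD _ theta(1)]) (simp add: e_def)
    finally show ?thesis by (simp add: e_def)
  qed
  have C1: "\<forall>k. y k \<in> ball x0 (tbar f' R) \<and> t k < tbar f' R \<and> 0 \<le> \<epsilon> k"
  proof
    fix k
    have "dist x0 (y k) < lam" using yball[of k] by simp
    then show "y k \<in> ball x0 (tbar f' R) \<and> t k < tbar f' R \<and> 0 \<le> \<epsilon> k"
      using lam_le_tbar tlam[of k] eb[of k] by simp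
  qed
  have C5: "\<forall>k. norm (blinfun_apply Finv (F (y k))) \<le> f (t k) + \<epsilon> k \<and>
          f (t k) + \<epsilon> k \<le> ((1 + \<theta>\<^sup>2) / 2) ^ k * (f t0 + \<epsilon>0)"
    using Kn(2) ugeo u0 by (simp add: u_def q_def)
  have R1: "lambda f f' R < R \<longrightarrow> (\<forall>k. norm (xs - y (Suc k)) \<le>
        ((1 + \<theta>) / 2 * (left_deriv f' (lambda f f' R) / \<bar>f' (lambda f f' R)\<bar>) * norm (xs - y k)
          + \<theta> * ((2 + f' (lambda f f' R)) / \<bar>f' (lambda f f' R)\<bar>)) * norm (xs - y k))"
    using rate1 by blast
  have R2: "lambda f f' R < R \<and> \<theta> < kappa f R / (4 + kappa f R) \<longrightarrow>
        (\<forall>k. norm (xs - y (Suc k)) \<le> ((1 + \<theta>) / 2 + 2 * \<theta> / kappa f R) * norm (xs - y k))"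
    using rate2 by blast
  have C7: "\<forall>k. norm (y (Suc k) - y k) \<le> t (Suc k) - t k \<and> norm (xs - y k) \<le> tt - t k"
    using stepy xsd by blast
  have U: "\<forall>z\<in>ball x0 (taubar f R). F z = 0 \<longrightarrow> z = xs" using uniq by blast
  show ?thesis
    apply (rule exI[of _ tt], rule exI[of _ ee], rule exI[of _ xs])
    using C1 P smt tlim ttpos ttlam emono elim ee0 eelam C5 yball ylim xscball xsball Fxs U C7 R1 R2
    by blast
qed

end


theorem theorem5p1:
  fixes F :: "'a::banach \<Rightarrow> 'b::banach"
    and F' :: "'a \<Rightarrow> ('a \<Rightarrow>\<^sub>L 'b)"
    and Finv :: "'b \<Rightarrow>\<^sub>L 'a"
    and C :: "'a set" and x0 :: 'a and R :: real
    and f f' :: "real \<Rightarrow> real"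
    and \<theta> :: real and N :: "'a \<Rightarrow> 'a"
    and t0 \<epsilon>0 :: real and y0 :: 'a
    and y :: "nat \<Rightarrow> 'a" and t \<epsilon> :: "nat \<Rightarrow> real"
  assumes F_cont: "continuous_on C F"
    and F_deriv: "\<forall>x\<in>interior C. (F has_derivative blinfun_apply (F' x)) (at x)"
    and F'_cont: "continuous_on (interior C) F'"
    and x0_int: "x0 \<in> interior C"
    and Finv_left: "Finv o\<^sub>L F' x0 = id_blinfun"
    and Finv_right: "F' x0 o\<^sub>L Finv = id_blinfun"
    and f_deriv: "\<forall>s\<in>{0..<R}. (f has_real_derivative f' s) (at s within {0..<R})"
    and f'_cont: "continuous_on {0..<R} f'"
    and ball_C: "ball x0 R \<subseteq> C"
    and majorant: "\<forall>x\<in>ball x0 R. \<forall>z\<in>ball x0 R. norm (x - x0) + norm (z - x) < R \<longrightarrow>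
        norm (Finv o\<^sub>L (F' z - F' x)) \<le> f' (norm (z - x) + norm (x - x0)) - f' (norm (x - x0))"
    and init: "norm (blinfun_apply Finv (F x0)) \<le> f 0"
    and h1: "f 0 > 0" "f' 0 = -1"
    and h2: "strict_mono_on {0..<R} f'" "convex_on {0..<R} f'"
    and h3: "\<exists>s\<in>{0<..<R}. f s < 0"
    and theta: "0 \<le> \<theta>" "\<theta> \<le> Theta f R"
    and N_in: "N \<in> Nclass F F' Finv x0 (tbar f' R) \<theta>"
    and start: "(t0, \<epsilon>0) \<in> Omega f f' R"
    and y0_in: "y0 \<in> Kset F Finv x0 f t0 \<epsilon>0"
    and y_0: "y 0 = y0" and y_Suc: "\<forall>k. y (Suc k) = N (y k)"
    and te_0: "(t 0, \<epsilon> 0) = (t0, \<epsilon>0)"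
    and te_Suc: "\<forall>k. (t (Suc k), \<epsilon> (Suc k)) = n_theta f f' \<theta> (t k, \<epsilon> k)"
  shows "\<exists>tt ee xs.
     (\<forall>k. y k \<in> ball x0 (tbar f' R) \<and> t k < tbar f' R \<and> 0 \<le> \<epsilon> k) \<and>
     (\<forall>k. y k \<in> Kset F Finv x0 f (t k) (\<epsilon> k) \<and> (t k, \<epsilon> k) \<in> Omega f f' R) \<and>
     strict_mono t \<and> t \<longlonglongrightarrow> tt \<and> 0 < tt \<and> tt \<le> lambda f f' R \<and>
     mono \<epsilon> \<and> \<epsilon> \<longlonglongrightarrow> ee \<and> 0 \<le> ee \<and> ee \<le> kappa f R * lambda f f' R \<and>
     (\<forall>k. norm (blinfun_apply Finv (F (y k))) \<le> f (t k) + \<epsilon> k \<and>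
          f (t k) + \<epsilon> k \<le> ((1 + \<theta>\<^sup>2) / 2) ^ k * (f t0 + \<epsilon>0)) \<and>
     (\<forall>k. y k \<in> ball x0 (lambda f f' R)) \<and>
     y \<longlonglongrightarrow> xs \<and> xs \<in> cball x0 (tstar f R) \<and>
     xs \<in> ball x0 (taubar f R) \<and> F xs = 0 \<and>
     (\<forall>z\<in>ball x0 (taubar f R). F z = 0 \<longrightarrow> z = xs) \<and>
     (\<forall>k. norm (y (Suc k) - y k) \<le> t (Suc k) - t k \<and> norm (xs - y k) \<le> tt - t k) \<and>
     (lambda f f' R < R \<longrightarrow> (\<forall>k. norm (xs - y (Suc k)) \<le>
        ((1 + \<theta>) / 2 * (left_deriv f' (lambda f f' R) / \<bar>f' (lambda f f' R)\<bar>) * norm (xs - y k)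
          + \<theta> * ((2 + f' (lambda f f' R)) / \<bar>f' (lambda f f' R)\<bar>)) * norm (xs - y k))) \<and>
     (lambda f f' R < R \<and> \<theta> < kappa f R / (4 + kappa f R) \<longrightarrow>
        (\<forall>k. norm (xs - y (Suc k)) \<le> ((1 + \<theta>) / 2 + 2 * \<theta> / kappa f R) * norm (xs - y k)))"
  proof -
  interpret NK f f' R F F' Finv C x0
  proof unfold_locales
    show "\<forall>s\<in>{0..<R}. (f has_real_derivative f' s) (at s within {0..<R})" by (rule f_deriv)
    show "continuous_on {0..<R} f'" by (rule f'_cont)
    show "f 0 > 0" "f' 0 = -1" by (rule h1(1), rule h1(2))
    show "strict_mono_on {0..<R} f'" "convex_on {0..<R} f'" by (rule h2(1), rule h2(2))
    show "\<exists>s\<in>{0<..<R}. f s < 0" by (rule h3)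
    show "\<forall>x\<in>interior C. (F has_derivative blinfun_apply (F' x)) (at x)" by (rule F_deriv)
    show "Finv o\<^sub>L F' x0 = id_blinfun" by (rule Finv_left)
    show "F' x0 o\<^sub>L Finv = id_blinfun" by (rule Finv_right)
    show "ball x0 R \<subseteq> C" by (rule ball_C)
    show "\<forall>x\<in>ball x0 R. \<forall>z\<in>ball x0 R. norm (x - x0) + norm (z - x) < R \<longrightarrow>
        norm (Finv o\<^sub>L (F' z - F' x)) \<le> f' (norm (z - x) + norm (x - x0)) - f' (norm (x - x0))"
      by (rule majorant)
    show "norm (blinfun_apply Finv (F x0)) \<le> f 0" by (rule init)
  qed
  show ?thesis by (rule main[OF theta N_in start y0_in y_0 y_Suc te_0 te_Suc])
qed

end
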